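(* Let $A,B,P,Q\in\mathbb{R}[x]$, and consider the following two conditions. $C_1$: for all $\lambda,\rho>0$, both $(\lambda A+\rho B,\ \lambda P+\rho Q)$ and $(\lambda B+\rho xA,\ \lambda Q+\rho xP)$ are interpolatory 1-cubes. $C_2$: for all $\kappa,\pi>0$, both $(\kappa A+\pi P,\ \kappa B+\pi Q)$ and $(\kappa P+\pi xA,\ \kappa Q+\pi xB)$ are interpolatory 1-cubes. Then $C_1$ and $C_2$ are equivalent.
   Context: A polynomial in $\mathbb{R}[x]$ is standard if it is identically $0$ or has positive leading coefficient. It has only nonpositive zeros if it is identically $0$ or all its zeros are real and $\le0$. Relation $\prec$: for $A,B$ with only real zeros, with zeros $\xi_1\le\cdots\le\xi_a$ of $A$ and $\theta_1\le\cdots\le\theta_b$ of $B$, $A\prec B$ means one of the following: - $\deg B=\deg A+1$ and $\theta_1\le\xi_1\le\theta_2\le\cdots\le\xi_a\le\theta_{a+1}$; - $\deg A=\deg B$ and $\xi_1\le\theta_1\le\cdots\le\xi_a\le\theta_a$. By convention $A\prec0$ and $0\prec A$ for any $A$ with only real zeros. An interpolatory 1-cube is a pair $(A,B)$ of standard polynomials with only nonpositive zeros such that $A\prec B$. *)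

theory Defs
  imports "HOL-Computational_Algebra.Polynomial"
begin

definition standard :: "real poly \<Rightarrow> bool" where
  "standard p \<longleftrightarrow> p = 0 \<or> lead_coeff p > 0"

definition real_rooted :: "real poly \<Rightarrow> bool" where
  "real_rooted p \<longleftrightarrow> p = 0 \<or>
     (\<exists>xs. p = smult (lead_coeff p) (\<Prod>x\<leftarrow>xs. [:-x, 1:]))"

definition nonpos_rooted :: "real poly \<Rightarrow> bool" where
  "nonpos_rooted p \<longleftrightarrow> p = 0 \<or>
     (\<exists>xs. (\<forall>x\<in>set xs. x \<le> 0) \<and> p = smult (lead_coeff p) (\<Prod>x\<leftarrow>xs. [:-x, 1:]))"

definition zero_list :: "real poly \<Rightarrow> real list" where
  "zero_list p = (SOME xs. sorted xs \<and> p = smult (lead_coeff p) (\<Prod>x\<leftarrow>xs. [:-x, 1:]))"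

definition interlaces :: "real poly \<Rightarrow> real poly \<Rightarrow> bool" (infix "\<prec>" 50) where
  "A \<prec> B \<longleftrightarrow> real_rooted A \<and> real_rooted B \<and>
     (A = 0 \<or> B = 0 \<or>
      (let xs = zero_list A; ts = zero_list B in
        (degree B = degree A + 1 \<and>
           (\<forall>i < length xs. ts ! i \<le> xs ! i \<and> xs ! i \<le> ts ! (i + 1)))
      \<or> (degree A = degree B \<and>
           (\<forall>i < length xs. xs ! i \<le> ts ! i) \<and>
           (\<forall>i. i + 1 < length xs \<longrightarrow> ts ! i \<le> xs ! (i + 1)))))"

definition interp_1cube :: "real poly \<Rightarrow> real poly \<Rightarrow> bool" where
  "interp_1cube A B \<longleftrightarrow> standard A \<and> standard B \<and> nonpos_rooted A \<and> nonpos_rooted B \<and> A \<prec> B"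

end

theory Submission
  imports Defs "HOL-Computational_Algebra.Fundamental_Theorem_Algebra" "HOL-Analysis.Analysis"
begin



abbreviation cp :: "real poly \<Rightarrow> complex poly" where "cp p \<equiv> map_poly complex_of_real p"

lemma coeff_cp: "coeff (cp p) n = of_real (coeff p n)"
  by (simp add: coeff_map_poly)

lemma cp_mult: "cp (p * q) = cp p * cp q"
  by (rule poly_eqI) (simp add: coeff_cp coeff_mult)

lemma cp_add: "cp (p + q) = cp p + cp q"
  by (rule poly_eqI) (simp add: coeff_cp)

lemma cp_smult: "cp (smult c p) = smult (of_real c) (cp p)"
  by (rule poly_eqI) (simp add: coeff_cp)

lemma cp_eq_0_iff: "cp p = 0 \<longleftrightarrow> p = 0"
  by (simp add: map_poly_eq_0_iff)

lemma poly_cp_real: "poly (cp p) (of_real x) = of_real (poly p x)"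
proof (induction p)
  case 0 then show ?case by simp
next
  case (pCons a p) then show ?case by (simp add: map_poly_pCons)
qed

lemma poly_cp_cnj: "poly (cp p) (cnj z) = cnj (poly (cp p) z)"
proof (induction p)
  case 0 then show ?case by simp
next
  case (pCons a p) then show ?case by (simp add: map_poly_pCons)
qed

lemma cp_lin: "poly (cp [:-x,1:]) z = z - of_real x"
  by (simp add: map_poly_pCons)

lemma poly_cp_linprod:
  "poly (cp (smult a (\<Prod>x\<leftarrow>xs. [:-x, 1:]))) z = of_real a * (\<Prod>x\<leftarrow>xs. z - of_real x)"
proof (induction xs arbitrary: a)
  case Nil then show ?case by (simp add: map_poly_pCons)
next
  case (Cons x xs)
  have "smult a (\<Prod>x\<leftarrow>x#xs. [:-x, 1:]) = [:-x,1:] * smult a (\<Prod>x\<leftarrow>xs. [:-x, 1:])"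
    by simp
  then have "poly (cp (smult a (\<Prod>x\<leftarrow>x#xs. [:-x, 1:]))) z
     = (z - of_real x) * poly (cp (smult a (\<Prod>x\<leftarrow>xs. [:-x, 1:]))) z"
    by (simp only: cp_mult poly_mult cp_lin)
  then show ?case using Cons by simp
qed




declare mult_pCons_left[simp del]

lemma linprod_nonzero: "(\<Prod>x\<leftarrow>xs. [:-x, 1::real:]) \<noteq> 0"
  by (induction xs) auto

lemma degree_linprod: "degree (\<Prod>x\<leftarrow>xs. [:-x, 1::real:]) = length xs"
proof (induction xs)
  case Nil then show ?case by simp
next
  case (Cons x xs)
  have "degree ([:-x,1:] * (\<Prod>x\<leftarrow>xs. [:-x, 1::real:])) = degree [:-x,1::real:] + degree (\<Prod>x\<leftarrow>xs. [:-x, 1::real:])"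
    by (rule degree_mult_eq) (auto simp: linprod_nonzero)
  then show ?case using Cons by simp
qed

lemma lead_coeff_linprod: "lead_coeff (\<Prod>x\<leftarrow>xs. [:-x, 1::real:]) = 1"
proof (induction xs)
  case Nil then show ?case by simp
next
  case (Cons x xs)
  have "lead_coeff ([:-x,1:] * (\<Prod>x\<leftarrow>xs. [:-x, 1::real:])) = lead_coeff [:-x,1::real:] * lead_coeff (\<Prod>x\<leftarrow>xs. [:-x, 1::real:])"
    by (rule lead_coeff_mult)
  then show ?case using Cons by simp
qed

lemma factor_real_roots:
  fixes p :: "real poly"
  assumes "p \<noteq> 0" "\<And>z. poly (cp p) z = 0 \<Longrightarrow> z \<in> \<real>"
  shows "\<exists>xs. p = smult (lead_coeff p) (\<Prod>x\<leftarrow>xs. [:-x, 1:])"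
  using assms
proof (induction "degree p" arbitrary: p rule: less_induct)
  case less
  show ?case
  proof (cases "degree p = 0")
    case True
    then obtain c where "p = [:c:]" by (rule degree_eq_zeroE)
    then show ?thesis by (intro exI[of _ "[]"]) simp
  next
    case False
    have "degree (cp p) = degree p" by (simp add: degree_map_poly)
    with False have "\<not> constant (poly (cp p))" by (simp add: constant_degree)
    then obtain z where z: "poly (cp p) z = 0" using fundamental_theorem_of_algebra by blast
    with less.prems have "z \<in> \<real>" by blast
    then obtain r where zr: "z = of_real r" by (auto elim: Reals_cases)
    with z have "poly p r = 0" by (simp add: poly_cp_real)
    then have "[:-r, 1:] dvd p" by (simp add: poly_eq_0_iff_dvd)
    then obtain q where pq: "p = [:-r,1:] * q" by (elim dvdE)
    with less.prems have q0: "q \<noteq> 0" by auto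
    have "degree ([:-r,1:]*q) = degree [:-r,1::real:] + degree q"
      by (rule degree_mult_eq) (use q0 in auto)
    then have dq: "degree p = Suc (degree q)" using pq by simp
    have qr: "\<And>w. poly (cp q) w = 0 \<Longrightarrow> w \<in> \<real>"
    proof -
      fix w assume "poly (cp q) w = 0"
      then have "poly (cp p) w = 0" by (simp add: pq cp_mult)
      then show "w \<in> \<real>" using less.prems by blast
    qed
    have "\<exists>ys. q = smult (lead_coeff q) (\<Prod>x\<leftarrow>ys. [:-x, 1:])"
      by (rule less.hyps) (use dq q0 qr in auto)
    then obtain ys where ys: "q = smult (lead_coeff q) (\<Prod>x\<leftarrow>ys. [:-x, 1:])"
      by blast
    define c where "c = lead_coeff q"
    have ys': "q = smult c (\<Prod>x\<leftarrow>ys. [:-x, 1:])" using ys c_def by simp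
    have "lead_coeff ([:-r,1:]*q) = lead_coeff [:-r,1::real:] * lead_coeff q"
      by (rule lead_coeff_mult)
    then have lpq: "lead_coeff p = c" using pq c_def by simp
    have peq: "p = smult c ([:-r,1:] * (\<Prod>x\<leftarrow>ys. [:-x, 1:]))"
      using pq ys' by (simp add: mult_smult_right)
    have peq2: "(\<Prod>x\<leftarrow>r#ys. [:-x,1:]) = [:-r,1:] * (\<Prod>x\<leftarrow>ys. [:-x,1::real:])" by simp
    have "p = smult (lead_coeff p) (\<Prod>x\<leftarrow>r#ys. [:-x, 1:])"
      unfolding lpq peq2 by (rule peq)
    then show ?thesis by blast
  qed
qed

lemma linprod_root: "x \<in> set xs \<Longrightarrow> poly (\<Prod>x\<leftarrow>xs. [:-x, 1::real:]) x = 0"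
  by (induction xs) (auto simp: poly_prod_list)

lemma nonpos_rootedI:
  assumes "p \<noteq> 0" "\<And>z. poly (cp p) z = 0 \<Longrightarrow> z \<in> \<real> \<and> Re z \<le> 0"
  shows "nonpos_rooted p"
proof -
  obtain xs where xs: "p = smult (lead_coeff p) (\<Prod>x\<leftarrow>xs. [:-x, 1:])"
    using factor_real_roots[of p] assms by blast
  have "\<forall>x\<in>set xs. x \<le> 0"
  proof
    fix x assume "x \<in> set xs"
    then have "poly p x = 0" by (subst xs) (simp add: linprod_root)
    then have "poly (cp p) (of_real x) = 0" by (simp add: poly_cp_real)
    then show "x \<le> 0" using assms(2) by fastforce
  qed
  then show ?thesis unfolding nonpos_rooted_def using xs by blast
qed

lemma real_rootedI:
  assumes "\<And>z. poly (cp p) z = 0 \<Longrightarrow> z \<in> \<real>"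
  shows "real_rooted p"
  using factor_real_roots[of p] assms unfolding real_rooted_def by blast

lemma linprod_eval_zero:
  assumes "poly (cp (smult a (\<Prod>x\<leftarrow>xs. [:-x, 1:]))) z = 0" "a \<noteq> 0"
  shows "\<exists>x\<in>set xs. z = of_real x"
proof -
  have "(\<Prod>x\<leftarrow>xs. z - of_real x) = 0" using assms by (simp add: poly_cp_linprod)
  then show ?thesis by (induction xs) auto
qed

lemma nonpos_rooted_roots:
  assumes "nonpos_rooted p" "p \<noteq> 0" "poly (cp p) z = 0"
  shows "z \<in> \<real> \<and> Re z \<le> 0"
proof -
  obtain xs where xs: "\<forall>x\<in>set xs. x \<le> 0" "p = smult (lead_coeff p) (\<Prod>x\<leftarrow>xs. [:-x, 1:])"
    using assms(1,2) unfolding nonpos_rooted_def by blast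
  then obtain x where "x \<in> set xs" "z = of_real x"
    using linprod_eval_zero[of "lead_coeff p" xs z] assms by auto
  then show ?thesis using xs by auto
qed

lemma real_rooted_roots:
  assumes "real_rooted p" "p \<noteq> 0" "poly (cp p) z = 0"
  shows "z \<in> \<real>"
proof -
  obtain xs where xs: "p = smult (lead_coeff p) (\<Prod>x\<leftarrow>xs. [:-x, 1:])"
    using assms(1,2) unfolding real_rooted_def by blast
  then obtain x where "x \<in> set xs" "z = of_real x"
    using linprod_eval_zero[of "lead_coeff p" xs z] assms by auto
  then show ?thesis by auto
qed

lemma prod_list_sort_linprod:
  "(\<Prod>x\<leftarrow>sort xs. [:-x, 1::real:]) = (\<Prod>x\<leftarrow>xs. [:-x, 1:])"
proof -
  have "mset (map (\<lambda>x. [:-x, 1::real:]) (sort xs)) = mset (map (\<lambda>x. [:-x, 1::real:]) xs)"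
    by simp
  from arg_cong[OF this, of prod_mset] show ?thesis by (simp only: prod_mset_prod_list)
qed

lemma zero_list_props:
  assumes "real_rooted p" "p \<noteq> 0"
  shows "sorted (zero_list p) \<and> p = smult (lead_coeff p) (\<Prod>x\<leftarrow>zero_list p. [:-x, 1:])"
proof -
  obtain xs where xs: "p = smult (lead_coeff p) (\<Prod>x\<leftarrow>xs. [:-x, 1:])"
    using assms unfolding real_rooted_def by blast
  have "\<exists>ys. sorted ys \<and> p = smult (lead_coeff p) (\<Prod>x\<leftarrow>ys. [:-x, 1:])"
    by (intro exI[of _ "sort xs"]) (simp add: prod_list_sort_linprod xs[symmetric])
  then show ?thesis unfolding zero_list_def by (rule someI_ex)
qed

lemma zero_list_root:
  assumes "real_rooted p" "p \<noteq> 0" "x \<in> set (zero_list p)"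
  shows "poly p x = 0"
proof -
  have "p = smult (lead_coeff p) (\<Prod>x\<leftarrow>zero_list p. [:-x, 1:])"
    using zero_list_props[OF assms(1,2)] by blast
  then have "poly p x = lead_coeff p * poly (\<Prod>x\<leftarrow>zero_list p. [:-x, 1:]) x"
    by (metis poly_smult)
  then show ?thesis using linprod_root[OF assms(3)] by simp
qed

lemma zero_list_length:
  assumes "real_rooted p" "p \<noteq> 0"
  shows "length (zero_list p) = degree p"
proof -
  have "lead_coeff p \<noteq> 0" using assms(2) by simp
  moreover have "p = smult (lead_coeff p) (\<Prod>x\<leftarrow>zero_list p. [:-x, 1:])"
    using zero_list_props[OF assms] by blast
  ultimately have "degree p = degree (\<Prod>x\<leftarrow>zero_list p. [:-x, 1::real:])"
    by (metis degree_smult_eq)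
  then show ?thesis by (simp add: degree_linprod)
qed




definition ang :: "complex \<Rightarrow> real" where
  "ang w = arccos (Re w / cmod w)"

lemma Re_div_cmod_bounds: "w \<noteq> 0 \<Longrightarrow> -1 \<le> Re w / cmod w \<and> Re w / cmod w \<le> 1"
proof -
  assume w: "w \<noteq> 0"
  then have c: "cmod w > 0" by simp
  have "\<bar>Re w\<bar> \<le> cmod w" by (rule abs_Re_le_cmod)
  then show ?thesis using c by (auto simp: divide_le_eq le_divide_eq abs_le_iff)
qed

lemma Re_div_cmod_strict: "Im w \<noteq> 0 \<Longrightarrow> -1 < Re w / cmod w \<and> Re w / cmod w < 1"
proof -
  assume w: "Im w \<noteq> 0"
  then have w0: "w \<noteq> 0" by auto
  then have c: "cmod w > 0" by simp
  have "(cmod w)\<^sup>2 = (Re w)\<^sup>2 + (Im w)\<^sup>2" by (rule cmod_power2)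
  moreover have "(Im w)\<^sup>2 > 0" using w by simp
  ultimately have "(Re w)\<^sup>2 < (cmod w)\<^sup>2" by simp
  then have "\<bar>Re w\<bar> < cmod w" using c
    by (metis abs_of_pos power2_abs power_less_imp_less_base norm_ge_zero)
  then show ?thesis using c by (auto simp: divide_less_eq less_divide_eq abs_less_iff)
qed

lemma ang_range: "Im w > 0 \<Longrightarrow> 0 < ang w \<and> ang w < pi"
  unfolding ang_def using Re_div_cmod_strict[of w] arccos_lt_bounded by auto

lemma ang_polar:
  assumes "Im w > 0"
  shows "w = of_real (cmod w) * cis (ang w)"
proof -
  have w0: "w \<noteq> 0" using assms by auto
  then have c: "cmod w > 0" by simp
  define c' where "c' = Re w / cmod w"
  have b: "-1 \<le> c'" "c' \<le> 1" using Re_div_cmod_bounds[OF w0] c'_def by auto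
  have cosa: "cos (ang w) = c'" unfolding ang_def c'_def[symmetric] using b by simp
  have "sin (ang w) = sqrt (1 - c'\<^sup>2)" unfolding ang_def c'_def[symmetric] using b by (simp add: sin_arccos)
  also have "1 - c'\<^sup>2 = ((cmod w)\<^sup>2 - (Re w)\<^sup>2) / (cmod w)\<^sup>2"
    unfolding c'_def using c by (simp add: field_simps)
  also have "\<dots> = (Im w)\<^sup>2 / (cmod w)\<^sup>2" using cmod_power2[of w] by simp
  also have "\<dots> = (Im w / cmod w)\<^sup>2" by (simp add: power_divide)
  also have "sqrt ((Im w / cmod w)\<^sup>2) = Im w / cmod w" using assms c by simp
  finally have sina: "sin (ang w) = Im w / cmod w" .
  have "Re (of_real (cmod w) * cis (ang w)) = cmod w * cos (ang w)" by simp
  also have "\<dots> = Re w" using c cosa c'_def by simp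
  finally have e1: "Re (of_real (cmod w) * cis (ang w)) = Re w" .
  have "Im (of_real (cmod w) * cis (ang w)) = cmod w * sin (ang w)" by simp
  also have "\<dots> = Im w" using c sina by simp
  finally have e2: "Im (of_real (cmod w) * cis (ang w)) = Im w" .
  show ?thesis using e1 e2 by (simp add: complex_eq_iff)
qed

lemma ang_of_real_pos: "x > 0 \<Longrightarrow> ang (of_real x) = 0"
  unfolding ang_def by simp

lemma ang_of_real_neg: "x < 0 \<Longrightarrow> ang (of_real x) = pi"
  unfolding ang_def by simp

lemma frac_mono_aux:
  fixes u v y :: real
  assumes "0 < y" "0 \<le> v" "v \<le> u"
  shows "v / sqrt (v\<^sup>2 + y\<^sup>2) \<le> u / sqrt (u\<^sup>2 + y\<^sup>2)"
proof -
  have y2: "y\<^sup>2 > 0" using assms by simp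
  have p1: "sqrt (v\<^sup>2 + y\<^sup>2) > 0" "sqrt (u\<^sup>2 + y\<^sup>2) > 0"
    using y2 by (intro real_sqrt_gt_zero add_nonneg_pos; simp)+
  have "v * sqrt (u\<^sup>2 + y\<^sup>2) = sqrt (v\<^sup>2 * (u\<^sup>2 + y\<^sup>2))" using assms by (simp add: real_sqrt_mult)
  also have "\<dots> \<le> sqrt (u\<^sup>2 * (v\<^sup>2 + y\<^sup>2))"
  proof (rule real_sqrt_le_mono)
    have "v\<^sup>2 \<le> u\<^sup>2" using assms by (simp add: power_mono)
    then have "v\<^sup>2 * y\<^sup>2 \<le> u\<^sup>2 * y\<^sup>2" by (simp add: mult_right_mono)
    then show "v\<^sup>2 * (u\<^sup>2 + y\<^sup>2) \<le> u\<^sup>2 * (v\<^sup>2 + y\<^sup>2)" by (simp add: algebra_simps)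
  qed
  also have "\<dots> = u * sqrt (v\<^sup>2 + y\<^sup>2)" using assms by (simp add: real_sqrt_mult)
  finally show ?thesis using p1 by (simp add: divide_simps)
qed

lemma frac_mono:
  fixes u v y :: real
  assumes "0 < y" "v \<le> u"
  shows "v / sqrt (v\<^sup>2 + y\<^sup>2) \<le> u / sqrt (u\<^sup>2 + y\<^sup>2)"
proof (cases "0 \<le> v")
  case True then show ?thesis using frac_mono_aux assms by blast
next
  case False
  show ?thesis
  proof (cases "0 \<le> u")
    case True
    have "v / sqrt (v\<^sup>2 + y\<^sup>2) \<le> 0" using False by (simp add: divide_nonpos_nonneg)
    also have "0 \<le> u / sqrt (u\<^sup>2 + y\<^sup>2)" using True by simp
    finally show ?thesis .
  next
    case u: False
    have "(-u) / sqrt ((-u)\<^sup>2 + y\<^sup>2) \<le> (-v) / sqrt ((-v)\<^sup>2 + y\<^sup>2)"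
      using frac_mono_aux[of y "-u" "-v"] assms u by auto
    then show ?thesis by simp
  qed
qed

lemma cmod_shift: "cmod (z - of_real r) = sqrt ((Re z - r)\<^sup>2 + (Im z)\<^sup>2)"
  by (simp add: cmod_def)

lemma ang_mono:
  assumes "Im z > 0" "r \<le> s"
  shows "ang (z - of_real r) \<le> ang (z - of_real s)"
proof -
  have i1: "Im (z - of_real r) \<noteq> 0" "Im (z - of_real s) \<noteq> 0" using assms by auto
  have "Re (z - of_real s) / cmod (z - of_real s) \<le> Re (z - of_real r) / cmod (z - of_real r)"
    unfolding cmod_shift using frac_mono[of "Im z" "Re z - s" "Re z - r"] assms by simp
  then show ?thesis unfolding ang_def
    using Re_div_cmod_strict[OF i1(1)] Re_div_cmod_strict[OF i1(2)]
    by (intro arccos_le_arccos) auto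
qed

lemma polar_prod:
  assumes "Im z > 0"
  shows "(\<Prod>x\<leftarrow>xs. z - of_real x) =
    of_real (\<Prod>x\<leftarrow>xs. cmod (z - of_real x)) * cis (\<Sum>x\<leftarrow>xs. ang (z - of_real x))"
proof (induction xs)
  case Nil then show ?case by simp
next
  case (Cons x xs)
  have "Im (z - of_real x) > 0" using assms by simp
  then have e: "z - of_real x = of_real (cmod (z - of_real x)) * cis (ang (z - of_real x))"
    by (rule ang_polar)
  have "(\<Prod>x\<leftarrow>x#xs. z - of_real x) = (z - of_real x) * (\<Prod>x\<leftarrow>xs. z - of_real x)" by simp
  also have "\<dots> = of_real (cmod (z - of_real x)) * cis (ang (z - of_real x)) *
      (of_real (\<Prod>x\<leftarrow>xs. cmod (z - of_real x)) * cis (\<Sum>x\<leftarrow>xs. ang (z - of_real x)))"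
    using e Cons by simp
  also have "\<dots> = of_real (cmod (z - of_real x) * (\<Prod>x\<leftarrow>xs. cmod (z - of_real x))) *
      (cis (ang (z - of_real x)) * cis (\<Sum>x\<leftarrow>xs. ang (z - of_real x)))"
    by (simp add: algebra_simps)
  also have "\<dots> = of_real (\<Prod>x\<leftarrow>x#xs. cmod (z - of_real x)) * cis (\<Sum>x\<leftarrow>x#xs. ang (z - of_real x))"
    by (simp add: cis_mult)
  finally show ?case .
qed

lemma prod_cmod_pos:
  assumes "Im z > 0"
  shows "(\<Prod>x\<leftarrow>xs. cmod (z - of_real x)) > 0"
proof (induction xs)
  case Nil then show ?case by simp
next
  case (Cons x xs)
  have "Im (z - of_real x) \<noteq> 0" using assms by simp
  then have "z - of_real x \<noteq> 0" by force
  then show ?case using Cons by simp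
qed

lemma poly_polar:
  assumes "Im z > 0"
  shows "poly (cp (smult a (\<Prod>x\<leftarrow>xs. [:-x, 1:]))) z =
    of_real (a * (\<Prod>x\<leftarrow>xs. cmod (z - of_real x))) * cis (\<Sum>x\<leftarrow>xs. ang (z - of_real x))"
  unfolding poly_cp_linprod polar_prod[OF assms] by simp




lemma sum_list_map_idx: "(\<Sum>x\<leftarrow>l. f x) = (\<Sum>i<length l. f (l ! i))"
  by (simp add: sum_list_sum_nth atLeast0LessThan)

lemma no_root_angle:
  fixes k1 k2 m1 m2 t1 t2 :: real
  assumes "k1 > 0" "k2 > 0" "m1 > 0" "m2 > 0" "-pi < t1 - t2" "t1 - t2 < pi"
  shows "of_real k1 * (of_real m1 * cis t1) + of_real k2 * (of_real m2 * cis t2) \<noteq> 0"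
proof
  assume h: "of_real k1 * (of_real m1 * cis t1) + of_real k2 * (of_real m2 * cis t2) = 0"
  have a: "cis t1 * cis (-t2) = cis (t1 - t2)" by (simp add: cis_mult)
  have b: "cis t2 * cis (-t2) = 1" by (simp add: cis_mult)
  have "(of_real k1 * (of_real m1 * cis t1) + of_real k2 * (of_real m2 * cis t2)) * cis (- t2)
      = of_real (k1 * m1) * (cis t1 * cis (-t2)) + of_real (k2 * m2) * (cis t2 * cis (-t2))"
    by (simp add: algebra_simps)
  also have "\<dots> = of_real (k1 * m1) * cis (t1 - t2) + of_real (k2 * m2)"
    unfolding a b by simp
  finally have "(of_real k1 * (of_real m1 * cis t1) + of_real k2 * (of_real m2 * cis t2)) * cis (- t2)
      = of_real (k1 * m1) * cis (t1 - t2) + of_real (k2 * m2)" .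
  with h have h2: "of_real (k1 * m1) * cis (t1 - t2) + of_real (k2 * m2) = 0" by simp
  then have "Im (of_real (k1 * m1) * cis (t1 - t2) + of_real (k2 * m2)) = 0" by simp
  then have "k1 * m1 * sin (t1 - t2) = 0" by simp
  then have "sin (t1 - t2) = 0" using assms by simp
  then have "t1 - t2 = 0" using sin_eq_0_pi assms by blast
  with h2 have "of_real (k1 * m1 + k2 * m2) = (0::complex)" by simp
  then have "k1 * m1 + k2 * m2 = 0" by (simp only: of_real_eq_0_iff)
  moreover have "k1 * m1 + k2 * m2 > 0" using assms by (simp add: add_pos_pos)
  ultimately show False by simp
qed

lemma root_angle:
  fixes m1 m2 t1 t2 :: real
  assumes "m1 > 0" "m2 > 0" "t1 - t2 = pi \<or> t1 - t2 = - pi"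
  shows "\<exists>c>0. of_real m1 * cis t1 + of_real c * (of_real m2 * cis t2) = 0"
proof -
  have "cis t1 = cis (t2 + (t1 - t2))" by simp
  also have "\<dots> = cis t2 * cis (t1 - t2)" by (simp add: cis_mult)
  also have "cis (t1 - t2) = -1" using assms(3) by (auto simp: complex_eq_iff)
  finally have c1: "cis t1 = - cis t2" by simp
  show ?thesis
    by (intro exI[of _ "m1 / m2"]) (use assms c1 in \<open>auto simp: field_simps\<close>)
qed

lemma pair_succ:
  fixes f :: "real \<Rightarrow> real"
  assumes len: "length ts = Suc (length xs)"
    and il: "\<And>i. i < length xs \<Longrightarrow> ts ! i \<le> xs ! i \<and> xs ! i \<le> ts ! Suc i"
    and mono: "\<And>r s. r \<le> s \<Longrightarrow> f r \<le> f s"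
    and rng: "\<And>r. 0 < f r \<and> f r < pi"
    and np: "\<And>t. t \<in> set ts \<Longrightarrow> t \<le> 0"
  shows "- pi < (\<Sum>t\<leftarrow>ts. f t) - (\<Sum>x\<leftarrow>xs. f x) \<and> (\<Sum>t\<leftarrow>ts. f t) - (\<Sum>x\<leftarrow>xs. f x) < pi
    \<and> - pi < (\<Sum>t\<leftarrow>ts. f t) - (\<Sum>x\<leftarrow>xs. f x) - f 0
    \<and> (\<Sum>t\<leftarrow>ts. f t) - (\<Sum>x\<leftarrow>xs. f x) - f 0 < pi"
proof -
  define n where "n = length xs"
  define T where "T i = f (ts ! i)" for i
  define X where "X i = f (xs ! i)" for i
  have ST: "(\<Sum>t\<leftarrow>ts. f t) = (\<Sum>i<Suc n. T i)" unfolding sum_list_map_idx T_def n_def len ..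
  have SX: "(\<Sum>x\<leftarrow>xs. f x) = (\<Sum>i<n. X i)" unfolding sum_list_map_idx X_def n_def ..
  have TX: "(\<Sum>i<n. T i) \<le> (\<Sum>i<n. X i)"
  proof (rule sum_mono)
    fix i assume "i \<in> {..<n}"
    then have "ts ! i \<le> xs ! i" using il n_def by auto
    then show "T i \<le> X i" unfolding T_def X_def by (rule mono)
  qed
  have XT: "(\<Sum>i<n. X i) \<le> (\<Sum>i<n. T (Suc i))"
  proof (rule sum_mono)
    fix i assume "i \<in> {..<n}"
    then have "xs ! i \<le> ts ! Suc i" using il n_def by auto
    then show "X i \<le> T (Suc i)" unfolding T_def X_def by (rule mono)
  qed
  have e1: "(\<Sum>i<Suc n. T i) = (\<Sum>i<n. T i) + T n" by simp
  have e2: "(\<Sum>i<Suc n. T i) = T 0 + (\<Sum>i<n. T (Suc i))" by (rule sum.lessThan_Suc_shift)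
  have Tn: "T n \<le> f 0"
  proof -
    have "ts ! n \<in> set ts" using len n_def by simp
    then have "ts ! n \<le> 0" by (rule np)
    then show ?thesis unfolding T_def by (rule mono)
  qed
  have r: "0 < T 0" "T n < pi" "0 < f 0" "f 0 < pi" using rng T_def by auto
  show ?thesis unfolding ST SX using TX XT e1 e2 Tn r by linarith
qed

lemma pair_eq:
  fixes f :: "real \<Rightarrow> real"
  assumes len: "length ts = length xs"
    and il1: "\<And>i. i < length xs \<Longrightarrow> xs ! i \<le> ts ! i"
    and il2: "\<And>i. Suc i < length xs \<Longrightarrow> ts ! i \<le> xs ! Suc i"
    and mono: "\<And>r s. r \<le> s \<Longrightarrow> f r \<le> f s"
    and rng: "\<And>r. 0 < f r \<and> f r < pi"
    and np: "\<And>t. t \<in> set ts \<Longrightarrow> t \<le> 0"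
  shows "- pi < (\<Sum>t\<leftarrow>ts. f t) - (\<Sum>x\<leftarrow>xs. f x) \<and> (\<Sum>t\<leftarrow>ts. f t) - (\<Sum>x\<leftarrow>xs. f x) < pi
    \<and> - pi < (\<Sum>t\<leftarrow>ts. f t) - (\<Sum>x\<leftarrow>xs. f x) - f 0
    \<and> (\<Sum>t\<leftarrow>ts. f t) - (\<Sum>x\<leftarrow>xs. f x) - f 0 < pi"
proof -
  define n where "n = length xs"
  define T where "T i = f (ts ! i)" for i
  define X where "X i = f (xs ! i)" for i
  have ST: "(\<Sum>t\<leftarrow>ts. f t) = (\<Sum>i<n. T i)" unfolding sum_list_map_idx T_def n_def len ..
  have SX: "(\<Sum>x\<leftarrow>xs. f x) = (\<Sum>i<n. X i)" unfolding sum_list_map_idx X_def n_def ..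
  have XT: "(\<Sum>i<n. X i) \<le> (\<Sum>i<n. T i)"
  proof (rule sum_mono)
    fix i assume "i \<in> {..<n}"
    then have "xs ! i \<le> ts ! i" using il1 n_def by auto
    then show "X i \<le> T i" unfolding T_def X_def by (rule mono)
  qed
  have r0: "0 < f 0" "f 0 < pi" using rng by auto
  show ?thesis
  proof (cases n)
    case 0
    then show ?thesis unfolding ST SX using r0 by simp
  next
    case (Suc m)
    have TX: "(\<Sum>i<m. T i) \<le> (\<Sum>i<m. X (Suc i))"
    proof (rule sum_mono)
      fix i assume "i \<in> {..<m}"
      then have "ts ! i \<le> xs ! Suc i" using il2 n_def Suc by auto
      then show "T i \<le> X (Suc i)" unfolding T_def X_def by (rule mono)
    qed
    have e1: "(\<Sum>i<n. T i) = (\<Sum>i<m. T i) + T m" using Suc by simp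
    have e2: "(\<Sum>i<n. X i) = X 0 + (\<Sum>i<m. X (Suc i))" unfolding Suc by (rule sum.lessThan_Suc_shift)
    have Tm: "T m \<le> f 0"
    proof -
      have "ts ! m \<in> set ts" using len n_def Suc by simp
      then have "ts ! m \<le> 0" by (rule np)
      then show ?thesis unfolding T_def by (rule mono)
    qed
    have r: "0 < X 0" "T m < pi" using rng T_def X_def by auto
    show ?thesis unfolding ST SX using TX XT e1 e2 Tm r r0 by linarith
  qed
qed

abbreviation good :: "real poly \<Rightarrow> bool" where
  "good p \<equiv> standard p \<and> nonpos_rooted p"

lemma standard_smult: "standard p \<Longrightarrow> c > 0 \<Longrightarrow> standard (smult c p)"
  unfolding standard_def by auto

lemma standard_add:
  assumes "standard p" "standard q"
  shows "standard (p + q)"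
proof (cases "p = 0 \<or> q = 0")
  case True then show ?thesis using assms by auto
next
  case False
  then have lp: "lead_coeff p > 0" and lq: "lead_coeff q > 0" using assms unfolding standard_def by auto
  consider "degree p < degree q" | "degree q < degree p" | "degree p = degree q" by linarith
  then show ?thesis
  proof cases
    case 1
    have "lead_coeff (p + q) = lead_coeff q" using 1 by (rule lead_coeff_add_le)
    then show ?thesis using lq unfolding standard_def by simp
  next
    case 2 then show ?thesis using lp unfolding standard_def
      by (metis add.commute lead_coeff_add_le)
  next
    case 3
    have c: "coeff (p + q) (degree p) = lead_coeff p + lead_coeff q" using 3 by simp
    then have "coeff (p + q) (degree p) \<noteq> 0" using lp lq by simp
    then have "degree p \<le> degree (p + q)" by (rule le_degree)
    moreover have "degree (p + q) \<le> degree p" using 3 by (metis degree_add_le order_refl)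
    ultimately have "degree (p + q) = degree p" by simp
    then have "lead_coeff (p + q) > 0" using c lp lq by simp
    then show ?thesis unfolding standard_def by simp
  qed
qed

lemma standard_X: "standard p \<Longrightarrow> standard ([:0,1:] * p)"
  unfolding standard_def by (auto simp: lead_coeff_mult)

lemma good_from_roots:
  assumes "\<And>z. Im z > 0 \<Longrightarrow> poly (cp H) z \<noteq> 0"
    and "\<And>x. x > 0 \<Longrightarrow> poly H x \<noteq> 0"
  shows "nonpos_rooted H"
proof (cases "H = 0")
  case True then show ?thesis unfolding nonpos_rooted_def by simp
next
  case False
  show ?thesis
  proof (rule nonpos_rootedI[OF False])
    fix z assume z: "poly (cp H) z = 0"
    have "Im z = 0"
    proof (rule ccontr)
      assume "Im z \<noteq> 0"
      then consider "Im z > 0" | "Im (cnj z) > 0" by (cases "Im z > 0") auto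
      then show False
      proof cases
        case 1 then show False using assms(1) z by blast
      next
        case 2
        have "poly (cp H) (cnj z) = 0" using z by (simp add: poly_cp_cnj)
        then show False using assms(1) 2 by blast
      qed
    qed
    then have zr: "z = of_real (Re z)" by (simp add: complex_eq_iff)
    then have "poly H (Re z) = 0" using z by (metis of_real_eq_0_iff poly_cp_real)
    then have "\<not> Re z > 0" using assms(2) by blast
    then show "z \<in> \<real> \<and> Re z \<le> 0" using zr by (metis Reals_of_real not_le)
  qed
qed

lemma nonpos_root_le0:
  assumes "nonpos_rooted p" "p \<noteq> 0" "poly p x = 0"
  shows "x \<le> 0"
proof -
  have "poly (cp p) (of_real x) = 0" using assms(3) by (simp add: poly_cp_real)
  then show ?thesis using nonpos_rooted_roots[OF assms(1,2)] by fastforce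
qed

lemma good_pos:
  assumes "good p" "p \<noteq> 0" "x > 0"
  shows "poly p x > 0"
proof -
  obtain xs where xs: "\<forall>r\<in>set xs. r \<le> 0" "p = smult (lead_coeff p) (\<Prod>r\<leftarrow>xs. [:-r, 1:])"
    using assms unfolding nonpos_rooted_def by blast
  have l: "lead_coeff p > 0" using assms unfolding standard_def by simp
  have "poly (\<Prod>r\<leftarrow>xs. [:-r, 1:]) x > 0" using xs(1)
  proof (induction xs)
    case Nil then show ?case by simp
  next
    case (Cons r rs) then show ?case using assms(3) by (simp add: poly_prod_list)
  qed
  then have "lead_coeff p * poly (\<Prod>r\<leftarrow>xs. [:-r, 1:]) x > 0" using l by simp
  then show ?thesis by (metis poly_smult xs(2))
qed




definition Th :: "real list \<Rightarrow> real list \<Rightarrow> complex \<Rightarrow> real" where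
  "Th xs ts z = (\<Sum>t\<leftarrow>ts. ang (z - of_real t)) - (\<Sum>x\<leftarrow>xs. ang (z - of_real x))"

lemma poly_cp_X: "poly (cp ([:0,1:] * p)) z = z * poly (cp p) z"
  by (simp add: cp_mult map_poly_pCons)

lemma poly_cp_combo: "poly (cp (smult k F + smult l G)) z = of_real k * poly (cp F) z + of_real l * poly (cp G) z"
  by (simp add: cp_add cp_smult)

lemma combo1_nz:
  assumes F: "F = smult a (\<Prod>x\<leftarrow>xs. [:-x, 1:])" and G: "G = smult b (\<Prod>x\<leftarrow>ts. [:-x, 1:])"
    and "a > 0" "b > 0" and z: "Im z > 0" and "k > 0" "l > 0"
    and th: "- pi < Th xs ts z" "Th xs ts z < pi"
  shows "poly (cp (smult k F + smult l G)) z \<noteq> 0"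
proof -
  define MF where "MF = (\<Prod>x\<leftarrow>xs. cmod (z - of_real x))"
  define MG where "MG = (\<Prod>x\<leftarrow>ts. cmod (z - of_real x))"
  define SF where "SF = (\<Sum>x\<leftarrow>xs. ang (z - of_real x))"
  define SG where "SG = (\<Sum>x\<leftarrow>ts. ang (z - of_real x))"
  have PF: "poly (cp F) z = of_real (a * MF) * cis SF"
    unfolding F MF_def SF_def by (rule poly_polar[OF z])
  have PG: "poly (cp G) z = of_real (b * MG) * cis SG"
    unfolding G MG_def SG_def by (rule poly_polar[OF z])
  have m: "MF > 0" "MG > 0" unfolding MF_def MG_def using prod_cmod_pos[OF z] by auto
  have "of_real l * (of_real (b * MG) * cis SG) + of_real k * (of_real (a * MF) * cis SF) \<noteq> 0"
    by (rule no_root_angle) (use assms m th in \<open>auto simp: Th_def SF_def SG_def\<close>)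
  then show ?thesis unfolding poly_cp_combo PF PG by (simp add: add.commute)
qed

lemma combo2_nz:
  assumes F: "F = smult a (\<Prod>x\<leftarrow>xs. [:-x, 1:])" and G: "G = smult b (\<Prod>x\<leftarrow>ts. [:-x, 1:])"
    and "a > 0" "b > 0" and z: "Im z > 0" and "k > 0" "l > 0"
    and th: "- pi < Th xs ts z - ang z" "Th xs ts z - ang z < pi"
  shows "poly (cp (smult k G + smult l ([:0,1:] * F))) z \<noteq> 0"
proof -
  define MF where "MF = (\<Prod>x\<leftarrow>xs. cmod (z - of_real x))"
  define MG where "MG = (\<Prod>x\<leftarrow>ts. cmod (z - of_real x))"
  define SF where "SF = (\<Sum>x\<leftarrow>xs. ang (z - of_real x))"
  define SG where "SG = (\<Sum>x\<leftarrow>ts. ang (z - of_real x))"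
  have PF: "poly (cp F) z = of_real (a * MF) * cis SF"
    unfolding F MF_def SF_def by (rule poly_polar[OF z])
  have PG: "poly (cp G) z = of_real (b * MG) * cis SG"
    unfolding G MG_def SG_def by (rule poly_polar[OF z])
  have m: "MF > 0" "MG > 0" unfolding MF_def MG_def using prod_cmod_pos[OF z] by auto
  have zp: "z = of_real (cmod z) * cis (ang z)" using ang_polar[OF z] .
  have cz: "cmod z > 0" using z by auto
  have PXF: "poly (cp ([:0,1:] * F)) z = of_real (a * MF * cmod z) * cis (SF + ang z)"
  proof -
    have "poly (cp ([:0,1:] * F)) z = (of_real (cmod z) * cis (ang z)) * (of_real (a * MF) * cis SF)"
      unfolding poly_cp_X PF using zp by simp
    also have "\<dots> = of_real (a * MF * cmod z) * (cis SF * cis (ang z))" by (simp add: algebra_simps)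
    also have "\<dots> = of_real (a * MF * cmod z) * cis (SF + ang z)" by (simp add: cis_mult)
    finally show ?thesis .
  qed
  have "of_real k * (of_real (b * MG) * cis SG) + of_real l * (of_real (a * MF * cmod z) * cis (SF + ang z)) \<noteq> 0"
    by (rule no_root_angle) (use assms m th cz in \<open>auto simp: Th_def SF_def SG_def algebra_simps\<close>)
  then show ?thesis unfolding poly_cp_combo PXF PG .
qed

lemma nonpos_rooted_smult:
  assumes "nonpos_rooted p" "c \<noteq> 0"
  shows "nonpos_rooted (smult c p)"
proof (cases "p = 0")
  case True then show ?thesis unfolding nonpos_rooted_def by simp
next
  case False
  show ?thesis
  proof (rule nonpos_rootedI)
    show "smult c p \<noteq> 0" using False assms by simp
    fix z assume "poly (cp (smult c p)) z = 0"
    then have "poly (cp p) z = 0" using assms by (simp add: cp_smult)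
    then show "z \<in> \<real> \<and> Re z \<le> 0" using nonpos_rooted_roots[OF assms(1) False] by blast
  qed
qed

lemma nonpos_rooted_X:
  assumes "nonpos_rooted p"
  shows "nonpos_rooted ([:0,1:] * p)"
proof (cases "p = 0")
  case True then show ?thesis unfolding nonpos_rooted_def by simp
next
  case False
  show ?thesis
  proof (rule nonpos_rootedI)
    show "[:0,1:] * p \<noteq> 0" using False by simp
    fix z assume "poly (cp ([:0,1:] * p)) z = 0"
    then have "z = 0 \<or> poly (cp p) z = 0" by (simp add: poly_cp_X)
    then show "z \<in> \<real> \<and> Re z \<le> 0" using nonpos_rooted_roots[OF assms(1) False] by auto
  qed
qed

lemma zl_facts:
  assumes "nonpos_rooted F" "F \<noteq> 0"
  shows "sorted (zero_list F)" "F = smult (lead_coeff F) (\<Prod>x\<leftarrow>zero_list F. [:-x, 1:])"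
    "\<And>x. x \<in> set (zero_list F) \<Longrightarrow> x \<le> 0" "length (zero_list F) = degree F"
proof -
  have rr: "real_rooted F" using assms(1) unfolding nonpos_rooted_def real_rooted_def by blast
  show "sorted (zero_list F)" "F = smult (lead_coeff F) (\<Prod>x\<leftarrow>zero_list F. [:-x, 1:])"
    using zero_list_props[OF rr assms(2)] by auto
  show "length (zero_list F) = degree F" by (rule zero_list_length[OF rr assms(2)])
  fix x assume "x \<in> set (zero_list F)"
  then have "poly F x = 0" by (rule zero_list_root[OF rr assms(2)])
  then show "x \<le> 0" by (rule nonpos_root_le0[OF assms(1,2)])
qed

lemma Th_bounds_fwd:
  assumes "nonpos_rooted F" "F \<noteq> 0" "nonpos_rooted G" "G \<noteq> 0"
    and il: "(degree G = degree F + 1 \<and>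
           (\<forall>i < length (zero_list F). zero_list G ! i \<le> zero_list F ! i \<and> zero_list F ! i \<le> zero_list G ! (i + 1)))
      \<or> (degree F = degree G \<and>
           (\<forall>i < length (zero_list F). zero_list F ! i \<le> zero_list G ! i) \<and>
           (\<forall>i. i + 1 < length (zero_list F) \<longrightarrow> zero_list G ! i \<le> zero_list F ! (i + 1)))"
    and z: "Im z > 0"
  shows "- pi < Th (zero_list F) (zero_list G) z \<and> Th (zero_list F) (zero_list G) z < pi
    \<and> - pi < Th (zero_list F) (zero_list G) z - ang z \<and> Th (zero_list F) (zero_list G) z - ang z < pi"
proof -
  define xs where "xs = zero_list F"
  define ts where "ts = zero_list G"
  define f where "f r = ang (z - of_real r)" for r
  have mono: "\<And>r s. r \<le> s \<Longrightarrow> f r \<le> f s" unfolding f_def using ang_mono[OF z] by blast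
  have rng: "\<And>r. 0 < f r \<and> f r < pi" unfolding f_def using ang_range z by simp
  have np: "\<And>t. t \<in> set ts \<Longrightarrow> t \<le> 0" unfolding ts_def using zl_facts(3)[OF assms(3,4)] by blast
  have lx: "length xs = degree F" unfolding xs_def using zl_facts(4)[OF assms(1,2)] .
  have lt: "length ts = degree G" unfolding ts_def using zl_facts(4)[OF assms(3,4)] .
  have f0: "f 0 = ang z" unfolding f_def by simp
  have thd: "Th xs ts z = (\<Sum>t\<leftarrow>ts. f t) - (\<Sum>x\<leftarrow>xs. f x)" unfolding Th_def f_def ..
  have il2: "(length ts = Suc (length xs) \<and> (\<forall>i<length xs. ts ! i \<le> xs ! i \<and> xs ! i \<le> ts ! Suc i))
    \<or> (length xs = length ts \<and> (\<forall>i<length xs. xs ! i \<le> ts ! i) \<and> (\<forall>i. Suc i < length xs \<longrightarrow> ts ! i \<le> xs ! Suc i))"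
    using il[folded xs_def ts_def] lx lt by simp
  then have "- pi < (\<Sum>t\<leftarrow>ts. f t) - (\<Sum>x\<leftarrow>xs. f x) \<and> (\<Sum>t\<leftarrow>ts. f t) - (\<Sum>x\<leftarrow>xs. f x) < pi
    \<and> - pi < (\<Sum>t\<leftarrow>ts. f t) - (\<Sum>x\<leftarrow>xs. f x) - f 0
    \<and> (\<Sum>t\<leftarrow>ts. f t) - (\<Sum>x\<leftarrow>xs. f x) - f 0 < pi"
  proof (elim disjE conjE)
    assume a: "length ts = Suc (length xs)" "\<forall>i<length xs. ts ! i \<le> xs ! i \<and> xs ! i \<le> ts ! Suc i"
    show ?thesis by (rule pair_succ[OF a(1) _ mono rng np]) (use a(2) in blast)
  next
    assume a: "length xs = length ts" "\<forall>i<length xs. xs ! i \<le> ts ! i"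
      "\<forall>i. Suc i < length xs \<longrightarrow> ts ! i \<le> xs ! Suc i"
    show ?thesis by (rule pair_eq[OF a(1)[symmetric] _ _ mono rng np]) (use a(2,3) in blast)+
  qed
  then show ?thesis unfolding xs_def[symmetric] ts_def[symmetric] thd f0 .
qed

lemma L_fwd:
  assumes cube: "interp_1cube F G" and k: "k > 0" and l: "l > 0"
  shows "good (smult k F + smult l G) \<and> good (smult k G + smult l ([:0,1:] * F))"
proof -
  have sF: "standard F" and sG: "standard G" and nF: "nonpos_rooted F" and nG: "nonpos_rooted G"
    and il: "F \<prec> G" using cube unfolding interp_1cube_def by auto
  have st: "standard (smult k F + smult l G)" "standard (smult k G + smult l ([:0,1:] * F))"
    using sF sG k l by (auto intro!: standard_add standard_smult standard_X)
  consider (F0) "F = 0" | (G0) "G = 0" | (nz) "F \<noteq> 0" "G \<noteq> 0" by blast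
  then show ?thesis
  proof cases
    case F0
    then show ?thesis using st nG k l by (simp add: nonpos_rooted_smult)
  next
    case G0
    then show ?thesis using st nF k l by (simp add: nonpos_rooted_smult nonpos_rooted_X)
  next
    case nz
    have lF: "lead_coeff F > 0" and lG: "lead_coeff G > 0" using sF sG nz unfolding standard_def by auto
    have ilc: "(degree G = degree F + 1 \<and>
           (\<forall>i < length (zero_list F). zero_list G ! i \<le> zero_list F ! i \<and> zero_list F ! i \<le> zero_list G ! (i + 1)))
      \<or> (degree F = degree G \<and>
           (\<forall>i < length (zero_list F). zero_list F ! i \<le> zero_list G ! i) \<and>
           (\<forall>i. i + 1 < length (zero_list F) \<longrightarrow> zero_list G ! i \<le> zero_list F ! (i + 1)))"
      using il nz unfolding interlaces_def Let_def by auto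
    note Feq = zl_facts(2)[OF nF nz(1)] and Geq = zl_facts(2)[OF nG nz(2)]
    have pF: "\<And>x. x > 0 \<Longrightarrow> poly F x > 0" using good_pos sF nF nz by blast
    have pG: "\<And>x. x > 0 \<Longrightarrow> poly G x > 0" using good_pos sG nG nz by blast
    have n1: "nonpos_rooted (smult k F + smult l G)"
    proof (rule good_from_roots)
      fix z :: complex assume z: "Im z > 0"
      show "poly (cp (smult k F + smult l G)) z \<noteq> 0"
        by (rule combo1_nz[OF Feq Geq lF lG z k l]) (use Th_bounds_fwd[OF nF nz(1) nG nz(2) ilc z] in auto)
    next
      fix x :: real assume "x > 0"
      then have "0 < k * poly F x + l * poly G x" using pF pG k l
        by (intro add_pos_pos mult_pos_pos) auto
      then show "poly (smult k F + smult l G) x \<noteq> 0" by simp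
    qed
    have n2: "nonpos_rooted (smult k G + smult l ([:0,1:] * F))"
    proof (rule good_from_roots)
      fix z :: complex assume z: "Im z > 0"
      show "poly (cp (smult k G + smult l ([:0,1:] * F))) z \<noteq> 0"
        by (rule combo2_nz[OF Feq Geq lF lG z k l]) (use Th_bounds_fwd[OF nF nz(1) nG nz(2) ilc z] in auto)
    next
      fix x :: real assume "x > 0"
      then have "0 < k * poly G x + l * (x * poly F x)" using pF pG k l
        by (intro add_pos_pos mult_pos_pos) auto
      then show "poly (smult k G + smult l ([:0,1:] * F)) x \<noteq> 0" by simp
    qed
    show ?thesis using st n1 n2 by blast
  qed
qed




lemma linprod_coeff_nonneg:
  assumes "\<forall>r\<in>set xs. r \<le> 0"
  shows "coeff (\<Prod>r\<leftarrow>xs. [:-r, 1::real:]) i \<ge> 0"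
  using assms
proof (induction xs arbitrary: i)
  case Nil then show ?case by (cases i) auto
next
  case (Cons r rs)
  have e: "(\<Prod>r\<leftarrow>r#rs. [:-r, 1::real:]) = smult (-r) (\<Prod>r\<leftarrow>rs. [:-r, 1:]) + pCons 0 (\<Prod>r\<leftarrow>rs. [:-r, 1:])"
    by (simp add: mult_pCons_left)
  have a: "coeff (\<Prod>r\<leftarrow>rs. [:-r, 1::real:]) j \<ge> 0" for j using Cons by simp
  have "coeff (pCons 0 (\<Prod>r\<leftarrow>rs. [:-r, 1::real:])) i \<ge> 0" using a by (cases i) auto
  moreover have "coeff (smult (-r) (\<Prod>r\<leftarrow>rs. [:-r, 1:])) i \<ge> 0" using a Cons.prems by (simp add: mult_nonpos_nonneg)
  ultimately show ?case unfolding e by simp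
qed

lemma good_coeff_nonneg:
  assumes "good p"
  shows "coeff p i \<ge> 0"
proof (cases "p = 0")
  case True then show ?thesis by simp
next
  case False
  obtain xs where xs: "\<forall>r\<in>set xs. r \<le> 0" "p = smult (lead_coeff p) (\<Prod>r\<leftarrow>xs. [:-r, 1:])"
    using assms False unfolding nonpos_rooted_def by blast
  have "lead_coeff p > 0" using assms False unfolding standard_def by simp
  then show ?thesis using linprod_coeff_nonneg[OF xs(1), of i] by (subst xs(2)) simp
qed

lemma eps_le:
  fixes A B C :: real
  assumes "C \<ge> 0" "\<And>e. e > 0 \<Longrightarrow> A \<le> B + e * C"
  shows "A \<le> B"
proof (rule ccontr)
  assume "\<not> A \<le> B"
  then have d: "A - B > 0" by simp
  define e where "e = (A - B) / (2 * (C + 1))"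
  have e0: "e > 0" unfolding e_def using d assms(1) by simp
  have "e * C < A - B"
  proof -
    have "e * C \<le> e * (C + 1)" using e0 by simp
    also have "\<dots> = (A - B) / 2" unfolding e_def using assms(1) by (simp add: field_simps)
    also have "\<dots> < A - B" using d by simp
    finally show ?thesis .
  qed
  with assms(2)[OF e0] show False by simp
qed

lemma nonneg_coeff_standard:
  fixes p :: "real poly"
  assumes "\<And>i. coeff p i \<ge> 0"
  shows "standard p"
  unfolding standard_def using assms[of "degree p"] by (metis leading_coeff_0_iff less_le)

lemma nonneg_coeff_pos:
  assumes "p \<noteq> 0" "\<And>i. coeff p i \<ge> 0" "x > (0::real)"
  shows "poly p x > 0"
proof -
  have l0: "lead_coeff p \<noteq> 0" using assms(1) by simp
  have l1: "lead_coeff p \<ge> 0" by (rule assms(2))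
  have lp: "lead_coeff p > 0" using l1 not_sym[OF l0] by (rule order_le_neq_trans)
  have xp: "x ^ degree p > 0" using assms(3) by simp
  have a: "0 < lead_coeff p * x ^ degree p" using lp xp by (rule mult_pos_pos)
  have b: "lead_coeff p * x ^ degree p \<le> (\<Sum>i\<le>degree p. coeff p i * x ^ i)"
  proof (rule member_le_sum)
    fix j assume "j \<in> {..degree p} - {degree p}"
    show "0 \<le> coeff p j * x ^ j" using assms(2)[of j] assms(3) by simp
  qed auto
  have "poly p x = (\<Sum>i\<le>degree p. coeff p i * x ^ i)" by (rule poly_altdef)
  then show ?thesis using a b by linarith
qed

lemma combo_nonzero:
  fixes F G :: "real poly"
  assumes "F \<noteq> 0" "\<And>i. coeff F i \<ge> 0" "\<And>i. coeff G i \<ge> 0" "k > 0" "l \<ge> 0"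
  shows "smult k F + smult l G \<noteq> 0"
proof
  assume h: "smult k F + smult l G = 0"
  have l0: "lead_coeff F \<noteq> 0" using assms(1) by simp
  have l1: "lead_coeff F \<ge> 0" by (rule assms(2))
  have lp: "lead_coeff F > 0" using l1 not_sym[OF l0] by (rule order_le_neq_trans)
  have c: "coeff (smult k F + smult l G) (degree F) = k * lead_coeff F + l * coeff G (degree F)" by simp
  have "k * lead_coeff F > 0" using lp assms(4) by (rule mult_pos_pos[rotated])
  moreover have "l * coeff G (degree F) \<ge> 0" using assms(5) assms(3) by (rule mult_nonneg_nonneg)
  ultimately have "coeff (smult k F + smult l G) (degree F) > 0" unfolding c by linarith
  then show False unfolding h by simp
qed

lemma cmod_mono_y:
  assumes "0 \<le> y1" "y1 \<le> y2"
  shows "cmod (Complex u y1) \<le> cmod (Complex u y2)"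
  using assms by (simp add: cmod_def power_mono)

lemma real_rooted_mono:
  assumes "real_rooted p" "0 \<le> y1" "y1 \<le> y2"
  shows "cmod (poly (cp p) (Complex u y1)) \<le> cmod (poly (cp p) (Complex u y2))"
proof (cases "p = 0")
  case True then show ?thesis by simp
next
  case False
  then obtain xs where xs: "p = smult (lead_coeff p) (\<Prod>x\<leftarrow>xs. [:-x, 1:])"
    using assms(1) unfolding real_rooted_def by blast
  have "cmod (\<Prod>x\<leftarrow>xs. Complex u y1 - of_real x) \<le> cmod (\<Prod>x\<leftarrow>xs. Complex u y2 - of_real x)"
  proof (induction xs)
    case Nil then show ?case by simp
  next
    case (Cons r rs)
    have "cmod (Complex u y1 - of_real r) \<le> cmod (Complex u y2 - of_real r)"
    proof -
      have d: "Complex u y - of_real r = Complex (u - r) y" for y by (simp add: complex_eq_iff)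
      show ?thesis unfolding d by (rule cmod_mono_y[OF assms(2,3)])
    qed
    then have "cmod (Complex u y1 - of_real r) * cmod (\<Prod>x\<leftarrow>rs. Complex u y1 - of_real x)
        \<le> cmod (Complex u y2 - of_real r) * cmod (\<Prod>x\<leftarrow>rs. Complex u y2 - of_real x)"
      using Cons by (intro mult_mono) auto
    then show ?case by (simp only: list.map prod_list.Cons norm_mult)
  qed
  then have "\<bar>lead_coeff p\<bar> * cmod (\<Prod>x\<leftarrow>xs. Complex u y1 - of_real x)
      \<le> \<bar>lead_coeff p\<bar> * cmod (\<Prod>x\<leftarrow>xs. Complex u y2 - of_real x)"
    by (rule mult_left_mono) simp
  then have "cmod (poly (cp (smult (lead_coeff p) (\<Prod>x\<leftarrow>xs. [:-x, 1:]))) (Complex u y1))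
     \<le> cmod (poly (cp (smult (lead_coeff p) (\<Prod>x\<leftarrow>xs. [:-x, 1:]))) (Complex u y2))"
    unfolding poly_cp_linprod norm_mult by simp
  then show ?thesis using xs by metis
qed

lemma nonpos_closure:
  fixes F G :: "real poly"
  assumes F0: "F \<noteq> 0" and cF: "\<And>i. coeff F i \<ge> 0"
    and h: "\<And>e. e > 0 \<Longrightarrow> nonpos_rooted (F + smult e G)"
  shows "nonpos_rooted F"
proof -
  have mono: "cmod (poly (cp F) (Complex u y1)) \<le> cmod (poly (cp F) (Complex u y2))"
    if y: "0 \<le> y1" "y1 \<le> y2" for u y1 y2
  proof (rule eps_le)
    let ?w1 = "Complex u y1" and ?w2 = "Complex u y2"
    show "0 \<le> cmod (poly (cp G) ?w1) + cmod (poly (cp G) ?w2)" by simp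
    fix e :: real assume e: "e > 0"
    have rr: "real_rooted (F + smult e G)" using h[OF e] unfolding nonpos_rooted_def real_rooted_def by blast
    have ev: "poly (cp (F + smult e G)) w = poly (cp F) w + of_real e * poly (cp G) w" for w
      by (simp add: cp_add cp_smult)
    have "cmod (poly (cp F) ?w1) \<le> cmod (poly (cp (F + smult e G)) ?w1) + e * cmod (poly (cp G) ?w1)"
      unfolding ev using norm_triangle_ineq4[of "poly (cp F) ?w1 + of_real e * poly (cp G) ?w1" "of_real e * poly (cp G) ?w1"] e
      by (simp add: norm_mult)
    also have "\<dots> \<le> cmod (poly (cp (F + smult e G)) ?w2) + e * cmod (poly (cp G) ?w1)"
      using real_rooted_mono[OF rr y] by simp
    also have "\<dots> \<le> cmod (poly (cp F) ?w2) + e * cmod (poly (cp G) ?w2) + e * cmod (poly (cp G) ?w1)"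
      unfolding ev using norm_triangle_ineq[of "poly (cp F) ?w2" "of_real e * poly (cp G) ?w2"] e
      by (simp add: norm_mult)
    finally show "cmod (poly (cp F) ?w1) \<le> cmod (poly (cp F) ?w2) + e * (cmod (poly (cp G) ?w1) + cmod (poly (cp G) ?w2))"
      by (simp add: algebra_simps)
  qed
  have upper: False if z: "poly (cp F) z = 0" "Im z > 0" for z
  proof -
    have "Complex (Re z) y \<in> {w. poly (cp F) w = 0}" if "y \<in> {0..Im z}" for y
    proof -
      have "cmod (poly (cp F) (Complex (Re z) y)) \<le> cmod (poly (cp F) (Complex (Re z) (Im z)))"
        using mono[of y "Im z" "Re z"] that by simp
      also have "Complex (Re z) (Im z) = z" by simp
      finally show ?thesis using z by simp
    qed
    then have "(\<lambda>y. Complex (Re z) y) ` {0..Im z} \<subseteq> {w. poly (cp F) w = 0}" by blast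
    moreover have "infinite ((\<lambda>y. Complex (Re z) y) ` {0..Im z})"
    proof -
      have "inj_on (\<lambda>y. Complex (Re z) y) {0..Im z}" by (auto simp: inj_on_def)
      moreover have "infinite {0..Im z}" using infinite_Icc z(2) by blast
      ultimately show ?thesis using finite_image_iff by blast
    qed
    ultimately show False using poly_roots_finite[of "cp F"] F0 cp_eq_0_iff finite_subset by metis
  qed
  show ?thesis
  proof (rule nonpos_rootedI[OF F0])
    fix z assume z: "poly (cp F) z = 0"
    have "Im z = 0"
    proof (rule ccontr)
      assume "Im z \<noteq> 0"
      then consider "Im z > 0" | "Im (cnj z) > 0" by (cases "Im z > 0") auto
      then show False
      proof cases
        case 1 then show False using upper z by blast
      next
        case 2
        have "poly (cp F) (cnj z) = 0" using z by (simp add: poly_cp_cnj)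
        then show False using upper 2 by blast
      qed
    qed
    then have zr: "z = of_real (Re z)" by (simp add: complex_eq_iff)
    then have "poly F (Re z) = 0" using z by (metis of_real_eq_0_iff poly_cp_real)
    then have "\<not> Re z > 0" using nonneg_coeff_pos[OF F0 cF] by force
    then show "z \<in> \<real> \<and> Re z \<le> 0" using zr by (metis Reals_of_real not_le)
  qed
qed




lemma continuous_on_ang_shift: "continuous_on (- {of_real r}) (\<lambda>z. ang (z - of_real r))"
  unfolding ang_def
proof (rule continuous_on_arccos)
  show "continuous_on (- {of_real r}) (\<lambda>z. Re (z - of_real r) / cmod (z - of_real r))"
    by (intro continuous_intros) auto
  show "\<forall>z\<in>- {of_real r}. - 1 \<le> Re (z - of_real r) / cmod (z - of_real r) \<and> Re (z - of_real r) / cmod (z - of_real r) \<le> 1"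
  proof
    fix z :: complex assume "z \<in> - {of_real r}"
    then have "z - of_real r \<noteq> 0" by auto
    then show "- 1 \<le> Re (z - of_real r) / cmod (z - of_real r) \<and> Re (z - of_real r) / cmod (z - of_real r) \<le> 1"
      by (rule Re_div_cmod_bounds)
  qed
qed

lemma continuous_on_sum_ang:
  assumes "\<And>t. t \<in> set l \<Longrightarrow> of_real t \<notin> S"
  shows "continuous_on S (\<lambda>z. \<Sum>t\<leftarrow>l. ang (z - of_real t))"
  using assms
proof (induction l)
  case Nil then show ?case by simp
next
  case (Cons t l)
  have "S \<subseteq> - {of_real t}" using Cons.prems by auto
  then have c1: "continuous_on S (\<lambda>z. ang (z - of_real t))"
    using continuous_on_subset[OF continuous_on_ang_shift] by blast
  have c2: "continuous_on S (\<lambda>z. \<Sum>t\<leftarrow>l. ang (z - of_real t))" using Cons by simp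
  show ?case using continuous_on_add[OF c1 c2] by simp
qed

lemma continuous_on_Th:
  assumes "\<And>t. t \<in> set xs \<union> set ts \<Longrightarrow> of_real t \<notin> S"
  shows "continuous_on S (Th xs ts)"
proof -
  have "continuous_on S (\<lambda>z. (\<Sum>t\<leftarrow>ts. ang (z - of_real t)) - (\<Sum>x\<leftarrow>xs. ang (z - of_real x)))"
    by (intro continuous_on_diff continuous_on_sum_ang) (use assms in auto)
  then show ?thesis unfolding Th_def[abs_def] .
qed

lemma continuous_on_ang: "continuous_on (- {0}) ang"
  using continuous_on_ang_shift[of 0] by simp

lemma isCont_Th:
  assumes "\<And>t. t \<in> set xs \<union> set ts \<Longrightarrow> p \<noteq> of_real t"
  shows "isCont (Th xs ts) p"
proof -
  define U where "U = - (of_real ` (set xs \<union> set ts) :: complex set)"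
  have "open U" unfolding U_def by (intro open_Compl finite_imp_closed) auto
  moreover have "continuous_on U (Th xs ts)" by (rule continuous_on_Th) (auto simp: U_def)
  moreover have "p \<in> U" using assms unfolding U_def by auto
  ultimately show ?thesis using continuous_on_eq_continuous_at by blast
qed

lemma isCont_ang: "p \<noteq> 0 \<Longrightarrow> isCont ang p"
  using continuous_on_ang continuous_on_eq_continuous_at[of "- {0}" ang] by auto

lemma conn_bound:
  fixes g :: "complex \<Rightarrow> real"
  assumes "continuous_on S g" "connected S" "z0 \<in> S" "- pi < g z0" "g z0 < pi"
    and avoid: "\<And>w. w \<in> S \<Longrightarrow> g w \<noteq> pi \<and> g w \<noteq> - pi" and z: "z \<in> S"
  shows "- pi < g z \<and> g z < pi"
proof -
  have C: "connected (g ` S)" by (rule connected_continuous_image[OF assms(1,2)])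
  have a: "g z0 \<in> g ` S" "g z \<in> g ` S" using assms(3) z by auto
  have "\<not> g z \<ge> pi"
  proof
    assume "g z \<ge> pi"
    then have "pi \<in> g ` S" using connectedD_interval[OF C a(1) a(2), of pi] assms(5) by simp
    then obtain w where "w \<in> S" "g w = pi" by (metis imageE)
    then show False using avoid[of w] by simp
  qed
  moreover have "\<not> g z \<le> - pi"
  proof
    assume "g z \<le> - pi"
    then have "- pi \<in> g ` S" using connectedD_interval[OF C a(2) a(1), of "- pi"] assms(4) by simp
    then obtain w where "w \<in> S" "g w = - pi" by (metis imageE)
    then show False using avoid[of w] by simp
  qed
  ultimately show ?thesis by simp
qed

lemma near_point:
  fixes g :: "complex \<Rightarrow> real"
  assumes "isCont g p" "Im p = 0" "- pi < g p" "g p < pi"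
  shows "\<exists>z. Im z > 0 \<and> - pi < g z \<and> g z < pi"
proof -
  define e where "e = min (pi - g p) (g p + pi)"
  have e: "e > 0" unfolding e_def using assms by simp
  obtain d where d: "d > 0" "\<And>x'. dist x' p < d \<Longrightarrow> dist (g x') (g p) < e"
    using assms(1) e unfolding continuous_at_eps_delta by blast
  define z where "z = p + \<i> * of_real (d / 2)"
  have "dist z p < d" using d unfolding z_def by (simp add: dist_norm norm_mult)
  then have "dist (g z) (g p) < e" using d by blast
  then have "- pi < g z \<and> g z < pi" unfolding e_def dist_real_def by auto
  moreover have "Im z > 0" unfolding z_def using d assms(2) by simp
  ultimately show ?thesis by blast
qed

lemma limit_bound:
  fixes g :: "complex \<Rightarrow> real"
  assumes "isCont g p" "Im p = 0" and b: "\<And>z. Im z > 0 \<Longrightarrow> - pi < g z \<and> g z < pi"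
  shows "- pi \<le> g p \<and> g p \<le> pi"
proof (rule ccontr)
  assume "\<not> (- pi \<le> g p \<and> g p \<le> pi)"
  then have e: "\<bar>g p\<bar> - pi > 0" by auto
  obtain d where d: "d > 0" "\<And>x'. dist x' p < d \<Longrightarrow> dist (g x') (g p) < \<bar>g p\<bar> - pi"
    using assms(1) e unfolding continuous_at_eps_delta by blast
  define z where "z = p + \<i> * of_real (d / 2)"
  have "dist z p < d" using d unfolding z_def by (simp add: dist_norm norm_mult)
  then have "dist (g z) (g p) < \<bar>g p\<bar> - pi" using d by blast
  moreover have "Im z > 0" unfolding z_def using d assms(2) by simp
  then have "- pi < g z \<and> g z < pi" by (rule b)
  ultimately show False unfolding dist_real_def by linarith
qed

lemma sum_ang_real:
  assumes "x \<notin> set l"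
  shows "(\<Sum>t\<leftarrow>l. ang (of_real x - of_real t)) = pi * real (length (filter (\<lambda>t. x < t) l))"
  using assms
proof (induction l)
  case Nil then show ?case by simp
next
  case (Cons t l)
  have ne: "x \<noteq> t" using Cons.prems by auto
  have e: "of_real x - of_real t = (of_real (x - t) :: complex)" by simp
  show ?case
  proof (cases "x < t")
    case True
    then have "ang (of_real x - of_real t) = pi" unfolding e by (intro ang_of_real_neg) simp
    then show ?thesis using Cons True by (simp add: algebra_simps)
  next
    case False
    then have "x > t" using ne by simp
    then have "ang (of_real x - of_real t) = 0" unfolding e by (intro ang_of_real_pos) simp
    then show ?thesis using Cons False by simp
  qed
qed

lemma Th_real:
  assumes "x \<notin> set xs" "x \<notin> set ts"
  shows "Th xs ts (of_real x) = pi * (real (length (filter (\<lambda>t. x < t) ts)) - real (length (filter (\<lambda>t. x < t) xs)))"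
  unfolding Th_def sum_ang_real[OF assms(1)] sum_ang_real[OF assms(2)] by (simp add: algebra_simps)




lemma cnt_ge:
  fixes l :: "real list"
  assumes "sorted l" "j < length l" "x < l ! j"
  shows "length l - j \<le> length (filter (\<lambda>t. x < t) l)"
proof -
  have all: "\<forall>y\<in>set (drop j l). x < y"
  proof
    fix y assume "y \<in> set (drop j l)"
    then obtain k where k: "k < length (drop j l)" "y = drop j l ! k" by (metis in_set_conv_nth)
    then have y: "y = l ! (j + k)" "j + k < length l" using assms(2) by auto
    have "l ! j \<le> l ! (j + k)" using sorted_nth_mono[OF assms(1), of j "j + k"] y(2) by simp
    then show "x < y" using y assms(3) by simp
  qed
  have "length (filter (\<lambda>t. x < t) l) = length (filter (\<lambda>t. x < t) (take j l)) + length (filter (\<lambda>t. x < t) (drop j l))"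
    by (metis append_take_drop_id filter_append length_append)
  also have "filter (\<lambda>t. x < t) (drop j l) = drop j l" using all by (rule filter_True)
  finally show ?thesis by simp
qed

lemma cnt_le:
  fixes l :: "real list"
  assumes "sorted l" "j < length l" "l ! j < x"
  shows "length (filter (\<lambda>t. x < t) l) + j + 1 \<le> length l"
proof -
  have none: "\<forall>y\<in>set (take (Suc j) l). \<not> x < y"
  proof
    fix y assume "y \<in> set (take (Suc j) l)"
    then obtain k where k: "k < length (take (Suc j) l)" "y = take (Suc j) l ! k" by (metis in_set_conv_nth)
    then have y: "y = l ! k" "k \<le> j" using assms(2) by auto
    have "l ! k \<le> l ! j" using sorted_nth_mono[OF assms(1) y(2) assms(2)] .
    then show "\<not> x < y" using y assms(3) by simp
  qed
  have "length (filter (\<lambda>t. x < t) l) = length (filter (\<lambda>t. x < t) (take (Suc j) l)) + length (filter (\<lambda>t. x < t) (drop (Suc j) l))"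
    by (metis append_take_drop_id filter_append length_append)
  also have "filter (\<lambda>t. x < t) (take (Suc j) l) = []" using none by (simp add: filter_empty_conv)
  finally have "length (filter (\<lambda>t. x < t) l) = length (filter (\<lambda>t. x < t) (drop (Suc j) l))" by simp
  also have "\<dots> \<le> length (drop (Suc j) l)" by (rule length_filter_le)
  finally show ?thesis using assms(2) by simp
qed

lemma exists_between:
  fixes u v :: real
  assumes "u < v" "finite A"
  shows "\<exists>x. u < x \<and> x < v \<and> x \<notin> A"
proof -
  have "infinite {u<..<v}" using assms(1) by simp
  then have "\<not> {u<..<v} \<subseteq> A" using assms(2) finite_subset by blast
  then show ?thesis by auto
qed

lemma exists_below:
  fixes c :: real
  assumes "finite A"
  shows "\<exists>x. x < c \<and> (\<forall>a\<in>A. x < a)"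
proof -
  define x where "x = - (\<bar>c\<bar> + (\<Sum>a\<in>A. \<bar>a\<bar>) + 1)"
  have s: "(\<Sum>a\<in>A. \<bar>a\<bar>) \<ge> 0" by (simp add: sum_nonneg)
  have "\<forall>a\<in>A. x < a"
  proof
    fix a assume "a \<in> A"
    then have "\<bar>a\<bar> \<le> (\<Sum>a\<in>A. \<bar>a\<bar>)" using assms by (intro member_le_sum) auto
    then show "x < a" unfolding x_def by linarith
  qed
  moreover have "x < c" unfolding x_def using s by linarith
  ultimately show ?thesis by blast
qed




lemma cnt_ge':
  fixes l :: "real list"
  assumes "sorted l" "j < length l" "x < l ! j"
  shows "length l \<le> j + length (filter (\<lambda>t. x < t) l)"
proof -
  have "length l - j \<le> length (filter (\<lambda>t. x < t) l)" by (rule cnt_ge[OF assms])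
  then show ?thesis using assms(2) by arith
qed

lemma combinatorial:
  fixes xs ts :: "real list"
  assumes sx: "sorted xs" and st: "sorted ts"
    and npx: "\<And>x. x \<in> set xs \<Longrightarrow> x \<le> 0" and npt: "\<And>x. x \<in> set ts \<Longrightarrow> x \<le> 0"
    and D: "\<And>x. x < 0 \<Longrightarrow> x \<notin> set xs \<Longrightarrow> x \<notin> set ts \<Longrightarrow>
       length (filter (\<lambda>t. x < t) xs) \<le> length (filter (\<lambda>t. x < t) ts) \<and>
       length (filter (\<lambda>t. x < t) ts) \<le> length (filter (\<lambda>t. x < t) xs) + 1"
  shows "(length ts = Suc (length xs) \<and> (\<forall>i<length xs. ts ! i \<le> xs ! i \<and> xs ! i \<le> ts ! Suc i))
    \<or> (length xs = length ts \<and> (\<forall>i<length xs. xs ! i \<le> ts ! i) \<and> (\<forall>i. Suc i < length xs \<longrightarrow> ts ! i \<le> xs ! Suc i))"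
proof -
  define A where "A = set xs \<union> set ts"
  have fA: "finite A" unfolding A_def by simp
  define C where "C l x = length (filter (\<lambda>t. x < t) l)" for l and x :: real
  have D': "x < 0 \<Longrightarrow> x \<notin> A \<Longrightarrow> C xs x \<le> C ts x \<and> C ts x \<le> C xs x + 1" for x
    using D unfolding A_def C_def by blast
  obtain x0 where x0: "x0 < 0" "\<forall>a\<in>A. x0 < a" using exists_below[OF fA] by blast
  have x0A: "x0 \<notin> A" using x0 by auto
  have "C xs x0 = length xs" unfolding C_def using x0 by (intro arg_cong[where f=length] filter_True) (auto simp: A_def)
  moreover have "C ts x0 = length ts" unfolding C_def using x0 by (intro arg_cong[where f=length] filter_True) (auto simp: A_def)
  ultimately have len: "length xs \<le> length ts" "length ts \<le> length xs + 1" using D'[OF x0(1) x0A] by auto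
  have btw: "\<exists>x. u < x \<and> x < v \<and> x \<notin> A" if "u < v" for u v using exists_between[OF that fA] .
  show ?thesis
  proof (cases "length ts = Suc (length xs)")
    case True
    have "ts ! i \<le> xs ! i \<and> xs ! i \<le> ts ! Suc i" if i: "i < length xs" for i
    proof
      show "ts ! i \<le> xs ! i"
      proof (rule ccontr)
        assume "\<not> ts ! i \<le> xs ! i"
        then have "xs ! i < ts ! i" by simp
        then obtain x where x: "xs ! i < x" "x < ts ! i" "x \<notin> A" using btw by blast
        have "ts ! i \<le> 0" using i True by (intro npt) simp
        then have "x < 0" using x by simp
        have c1: "length ts - i \<le> C ts x" unfolding C_def by (rule cnt_ge[OF st]) (use i True x in auto)
        have c2: "C xs x + i + 1 \<le> length xs" unfolding C_def by (rule cnt_le[OF sx]) (use i x in auto)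
        show False using D'[OF \<open>x < 0\<close> x(3)] c1 c2 True i by linarith
      qed
      show "xs ! i \<le> ts ! Suc i"
      proof (rule ccontr)
        assume "\<not> xs ! i \<le> ts ! Suc i"
        then have "ts ! Suc i < xs ! i" by simp
        then obtain x where x: "ts ! Suc i < x" "x < xs ! i" "x \<notin> A" using btw by blast
        have "xs ! i \<le> 0" using i by (intro npx) simp
        then have "x < 0" using x by simp
        have c1: "length xs - i \<le> C xs x" unfolding C_def by (rule cnt_ge[OF sx]) (use i x in auto)
        have c2: "C ts x + Suc i + 1 \<le> length ts" unfolding C_def by (rule cnt_le[OF st]) (use i True x in auto)
        show False using D'[OF \<open>x < 0\<close> x(3)] c1 c2 True i by linarith
      qed
    qed
    then show ?thesis using True by blast
  next
    case False
    then have eq: "length xs = length ts" using len by linarith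
    have p1: "xs ! i \<le> ts ! i" if i: "i < length xs" for i
    proof (rule ccontr)
      assume "\<not> xs ! i \<le> ts ! i"
      then have "ts ! i < xs ! i" by simp
      then obtain x where x: "ts ! i < x" "x < xs ! i" "x \<notin> A" using btw by blast
      have "xs ! i \<le> 0" using i by (intro npx) simp
      then have "x < 0" using x by simp
      have c1: "length xs - i \<le> C xs x" unfolding C_def by (rule cnt_ge[OF sx]) (use i x in auto)
      have c2: "C ts x + i + 1 \<le> length ts" unfolding C_def by (rule cnt_le[OF st]) (use i eq x in auto)
      show False using D'[OF \<open>x < 0\<close> x(3)] c1 c2 eq i by linarith
    qed
    have p2: "ts ! i \<le> xs ! Suc i" if i: "Suc i < length xs" for i
    proof (rule ccontr)
      assume "\<not> ts ! i \<le> xs ! Suc i"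
      then have "xs ! Suc i < ts ! i" by simp
      then obtain x where x: "xs ! Suc i < x" "x < ts ! i" "x \<notin> A" using btw by blast
      have "ts ! i \<le> 0" using i eq by (intro npt) simp
      then have "x < 0" using x by simp
      have c1: "length ts - i \<le> C ts x" unfolding C_def by (rule cnt_ge[OF st]) (use i eq x in auto)
      have c2: "C xs x + Suc i + 1 \<le> length xs" unfolding C_def by (rule cnt_le[OF sx]) (use i x in auto)
      show False using D'[OF \<open>x < 0\<close> x(3)] c1 c2 eq i by linarith
    qed
    show ?thesis using eq p1 p2 by blast
  qed
qed




lemma avoid_angles:
  assumes F: "F = smult a (\<Prod>x\<leftarrow>xs. [:-x, 1:])" and G: "G = smult b (\<Prod>x\<leftarrow>ts. [:-x, 1:])"
    and ab: "a > 0" "b > 0" and z: "Im z > 0"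
    and h1: "\<And>c. c > 0 \<Longrightarrow> poly (cp (smult c F + smult 1 G)) z \<noteq> 0"
    and h2: "\<And>c. c > 0 \<Longrightarrow> poly (cp (smult 1 G + smult c ([:0,1:] * F))) z \<noteq> 0"
  shows "Th xs ts z \<noteq> pi \<and> Th xs ts z \<noteq> - pi \<and> Th xs ts z - ang z \<noteq> pi \<and> Th xs ts z - ang z \<noteq> - pi"
proof -
  define MF where "MF = (\<Prod>x\<leftarrow>xs. cmod (z - of_real x))"
  define MG where "MG = (\<Prod>x\<leftarrow>ts. cmod (z - of_real x))"
  define SF where "SF = (\<Sum>x\<leftarrow>xs. ang (z - of_real x))"
  define SG where "SG = (\<Sum>x\<leftarrow>ts. ang (z - of_real x))"
  have PF: "poly (cp F) z = of_real (a * MF) * cis SF"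
    unfolding F MF_def SF_def by (rule poly_polar[OF z])
  have PG: "poly (cp G) z = of_real (b * MG) * cis SG"
    unfolding G MG_def SG_def by (rule poly_polar[OF z])
  have m: "MF > 0" "MG > 0" unfolding MF_def MG_def using prod_cmod_pos[OF z] by auto
  have zp: "z = of_real (cmod z) * cis (ang z)" using ang_polar[OF z] .
  have cz: "cmod z > 0" using z by auto
  have PXF: "poly (cp ([:0,1:] * F)) z = of_real (a * MF * cmod z) * cis (SF + ang z)"
  proof -
    have "poly (cp ([:0,1:] * F)) z = (of_real (cmod z) * cis (ang z)) * (of_real (a * MF) * cis SF)"
      unfolding poly_cp_X PF using zp by simp
    also have "\<dots> = of_real (a * MF * cmod z) * (cis SF * cis (ang z))" by (simp add: algebra_simps)
    also have "\<dots> = of_real (a * MF * cmod z) * cis (SF + ang z)" by (simp add: cis_mult)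
    finally show ?thesis .
  qed
  have thd: "Th xs ts z = SG - SF" unfolding Th_def SF_def SG_def ..
  have t1: "\<not> (SG - SF = pi \<or> SG - SF = - pi)"
  proof
    assume th: "SG - SF = pi \<or> SG - SF = - pi"
    have "b * MG > 0" "a * MF > 0" using ab m by auto
    then obtain c where c: "c > 0" "of_real (b * MG) * cis SG + of_real c * (of_real (a * MF) * cis SF) = 0"
      using root_angle[OF _ _ th] by blast
    then have "poly (cp (smult c F + smult 1 G)) z = 0" unfolding poly_cp_combo PF PG
      by (simp add: add.commute)
    with h1[OF c(1)] show False by simp
  qed
  have t2: "\<not> (SG - (SF + ang z) = pi \<or> SG - (SF + ang z) = - pi)"
  proof
    assume th: "SG - (SF + ang z) = pi \<or> SG - (SF + ang z) = - pi"
    have "b * MG > 0" "a * MF * cmod z > 0" using ab m cz by auto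
    then obtain c where c: "c > 0" "of_real (b * MG) * cis SG + of_real c * (of_real (a * MF * cmod z) * cis (SF + ang z)) = 0"
      using root_angle[OF _ _ th] by blast
    then have "poly (cp (smult 1 G + smult c ([:0,1:] * F))) z = 0" unfolding poly_cp_combo PXF PG
      by simp
    with h2[OF c(1)] show False by simp
  qed
  show ?thesis unfolding thd using t1 t2 by (auto simp: algebra_simps)
qed

lemma interlace_bwd:
  fixes F G :: "real poly"
  assumes F0: "F \<noteq> 0" and G0: "G \<noteq> 0" and nF: "nonpos_rooted F" and nG: "nonpos_rooted G"
    and sF: "standard F" and sG: "standard G"
    and h1: "\<And>c z. c > 0 \<Longrightarrow> Im z > 0 \<Longrightarrow> poly (cp (smult c F + smult 1 G)) z \<noteq> 0"
    and h2: "\<And>c z. c > 0 \<Longrightarrow> Im z > 0 \<Longrightarrow> poly (cp (smult 1 G + smult c ([:0,1:] * F))) z \<noteq> 0"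
  shows "(degree G = degree F + 1 \<and>
           (\<forall>i < length (zero_list F). zero_list G ! i \<le> zero_list F ! i \<and> zero_list F ! i \<le> zero_list G ! (i + 1)))
      \<or> (degree F = degree G \<and>
           (\<forall>i < length (zero_list F). zero_list F ! i \<le> zero_list G ! i) \<and>
           (\<forall>i. i + 1 < length (zero_list F) \<longrightarrow> zero_list G ! i \<le> zero_list F ! (i + 1)))"
proof -
  define xs where "xs = zero_list F"
  define ts where "ts = zero_list G"
  have Feq: "F = smult (lead_coeff F) (\<Prod>x\<leftarrow>xs. [:-x, 1:])" unfolding xs_def by (rule zl_facts(2)[OF nF F0])
  have Geq: "G = smult (lead_coeff G) (\<Prod>x\<leftarrow>ts. [:-x, 1:])" unfolding ts_def by (rule zl_facts(2)[OF nG G0])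
  have sx: "sorted xs" unfolding xs_def by (rule zl_facts(1)[OF nF F0])
  have st: "sorted ts" unfolding ts_def by (rule zl_facts(1)[OF nG G0])
  have npx: "\<And>x. x \<in> set xs \<Longrightarrow> x \<le> 0" unfolding xs_def by (rule zl_facts(3)[OF nF F0])
  have npt: "\<And>x. x \<in> set ts \<Longrightarrow> x \<le> 0" unfolding ts_def by (rule zl_facts(3)[OF nG G0])
  have lx: "length xs = degree F" unfolding xs_def by (rule zl_facts(4)[OF nF F0])
  have lt: "length ts = degree G" unfolding ts_def by (rule zl_facts(4)[OF nG G0])
  have a: "lead_coeff F > 0" using sF F0 unfolding standard_def by simp
  have b: "lead_coeff G > 0" using sG G0 unfolding standard_def by simp
  define S where "S = {z. Im z > 0}"
  define g1 where "g1 = Th xs ts"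
  define g2 where "g2 = (\<lambda>z. Th xs ts z - ang z)"
  have av: "g1 z \<noteq> pi \<and> g1 z \<noteq> - pi \<and> g2 z \<noteq> pi \<and> g2 z \<noteq> - pi" if "z \<in> S" for z
    unfolding g1_def g2_def
    by (rule avoid_angles[OF Feq Geq a b]) (use that h1 h2 in \<open>auto simp: S_def\<close>)
  have cS: "connected S" unfolding S_def by (rule convex_connected[OF convex_halfspace_Im_gt])
  have notin: "\<And>t. t \<in> set xs \<union> set ts \<Longrightarrow> of_real t \<notin> S" unfolding S_def by simp
  have cg1: "continuous_on S g1" unfolding g1_def by (rule continuous_on_Th[OF notin])
  have cg2: "continuous_on S g2"
  proof -
    have "S \<subseteq> - {0}" unfolding S_def by auto
    then have "continuous_on S ang" using continuous_on_subset[OF continuous_on_ang] by blast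
    then show ?thesis unfolding g2_def using continuous_on_diff[OF cg1[unfolded g1_def]] by blast
  qed
  have one: "(1::real) \<notin> set xs" "(1::real) \<notin> set ts" using npx npt by force+
  have f1: "filter (\<lambda>t. 1 < t) xs = []" "filter (\<lambda>t. 1 < t) ts = []"
    using npx npt by (auto simp: filter_empty_conv) (meson not_less order_trans zero_le_one)+
  have g1_1: "g1 (of_real 1) = 0" unfolding g1_def using Th_real[OF one] f1 by simp
  have ang1: "ang (of_real 1) = 0" by (rule ang_of_real_pos) simp
  have g2_1: "g2 (of_real 1) = 0" using g1_1 ang1 unfolding g2_def g1_def by simp
  have ic1: "isCont g1 p" if "\<And>t. t \<in> set xs \<union> set ts \<Longrightarrow> p \<noteq> of_real t" for p
    unfolding g1_def by (rule isCont_Th) (use that in blast)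
  have ic2: "isCont g2 p" if "\<And>t. t \<in> set xs \<union> set ts \<Longrightarrow> p \<noteq> of_real t" "p \<noteq> 0" for p
  proof -
    have "isCont (Th xs ts) p" by (rule isCont_Th) (use that in blast)
    moreover have "isCont ang p" by (rule isCont_ang) (use that in blast)
    ultimately show ?thesis unfolding g2_def by (rule isCont_diff)
  qed
  have p1: "\<And>t. t \<in> set xs \<union> set ts \<Longrightarrow> (of_real 1 :: complex) \<noteq> of_real t" using one by auto
  obtain z1 where z1: "Im z1 > 0" "- pi < g1 z1" "g1 z1 < pi"
    using near_point[OF ic1[OF p1]] g1_1 by auto
  obtain z2 where z2: "Im z2 > 0" "- pi < g2 z2" "g2 z2 < pi"
    using near_point[OF ic2[OF p1]] g2_1 by auto
  have B1: "- pi < g1 z \<and> g1 z < pi" if "Im z > 0" for z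
    by (rule conn_bound[OF cg1 cS, of z1]) (use z1 that av in \<open>auto simp: S_def\<close>)
  have B2: "- pi < g2 z \<and> g2 z < pi" if "Im z > 0" for z
    by (rule conn_bound[OF cg2 cS, of z2]) (use z2 that av in \<open>auto simp: S_def\<close>)
  have D: "length (filter (\<lambda>t. x < t) xs) \<le> length (filter (\<lambda>t. x < t) ts) \<and>
       length (filter (\<lambda>t. x < t) ts) \<le> length (filter (\<lambda>t. x < t) xs) + 1"
    if x: "x < 0" "x \<notin> set xs" "x \<notin> set ts" for x
  proof -
    define d where "d = real (length (filter (\<lambda>t. x < t) ts)) - real (length (filter (\<lambda>t. x < t) xs))"
    have px: "\<And>t. t \<in> set xs \<union> set ts \<Longrightarrow> (of_real x :: complex) \<noteq> of_real t" using x by auto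
    have px0: "(of_real x :: complex) \<noteq> 0" using x by simp
    have l1: "- pi \<le> g1 (of_real x) \<and> g1 (of_real x) \<le> pi"
      by (rule limit_bound[OF ic1[OF px]]) (use B1 in auto)
    have l2: "- pi \<le> g2 (of_real x) \<and> g2 (of_real x) \<le> pi"
      by (rule limit_bound[OF ic2[OF px px0]]) (use B2 in auto)
    have e1: "g1 (of_real x) = pi * d" unfolding g1_def d_def by (rule Th_real[OF x(2,3)])
    have angx: "ang (of_real x) = pi" by (rule ang_of_real_neg[OF x(1)])
    have e2: "g2 (of_real x) = pi * d - pi" unfolding g2_def using e1 angx unfolding g1_def by simp
    have "pi * d \<le> pi * 1" using l1 e1 by simp
    then have d1: "d \<le> 1" by (rule mult_left_le_imp_le) simp
    have "pi * 0 \<le> pi * d" using l2 e2 by simp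
    then have d0: "0 \<le> d" by (rule mult_left_le_imp_le) simp
    show ?thesis using d0 d1 unfolding d_def by linarith
  qed
  have comb: "(length ts = Suc (length xs) \<and> (\<forall>i<length xs. ts ! i \<le> xs ! i \<and> xs ! i \<le> ts ! Suc i))
    \<or> (length xs = length ts \<and> (\<forall>i<length xs. xs ! i \<le> ts ! i) \<and> (\<forall>i. Suc i < length xs \<longrightarrow> ts ! i \<le> xs ! Suc i))"
    by (rule combinatorial[OF sx st npx npt D])
  then show ?thesis unfolding xs_def[symmetric] ts_def[symmetric] lx[symmetric] lt[symmetric] by simp
qed




lemma coeff_X_nonneg:
  fixes F :: "real poly"
  assumes "\<And>i. coeff F i \<ge> 0"
  shows "coeff ([:0,1:] * F) i \<ge> 0"
proof -
  have "[:0,1:] * F = pCons 0 F" by (simp add: mult_pCons_left)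
  then show ?thesis using assms by (cases i) auto
qed

lemma coeff_limit:
  fixes F G :: "real poly"
  assumes "\<And>e. e > 0 \<Longrightarrow> coeff (F + smult e G) i \<ge> 0"
  shows "coeff F i \<ge> 0"
proof -
  have E: "- coeff F i \<le> 0 + e * \<bar>coeff G i\<bar>" if "e > 0" for e
  proof -
    have "0 \<le> coeff F i + e * coeff G i" using assms[OF that] by simp
    moreover have "e * coeff G i \<le> e * \<bar>coeff G i\<bar>" using that by (simp add: mult_left_mono)
    ultimately show ?thesis by linarith
  qed
  have "- coeff F i \<le> 0" by (rule eps_le[of "\<bar>coeff G i\<bar>"]) (simp, rule E)
  then show ?thesis by simp
qed

lemma L_bwd:
  fixes F G :: "real poly"
  assumes h: "\<And>k l. k > 0 \<Longrightarrow> l > 0 \<Longrightarrow> good (smult k F + smult l G) \<and> good (smult k G + smult l ([:0,1:] * F))"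
  shows "interp_1cube F G"
proof -
  have cF: "coeff F i \<ge> 0" for i
  proof (rule coeff_limit[of F G])
    fix e :: real assume "e > 0"
    then have "good (smult 1 F + smult e G)" using h[of 1 e] by simp
    then show "coeff (F + smult e G) i \<ge> 0" using good_coeff_nonneg by fastforce
  qed
  have cG: "coeff G i \<ge> 0" for i
  proof (rule coeff_limit[of G F])
    fix e :: real assume "e > 0"
    then have "good (smult e F + smult 1 G)" using h[of e 1] by simp
    then have "good (G + smult e F)" by (simp add: add.commute)
    then show "coeff (G + smult e F) i \<ge> 0" using good_coeff_nonneg by blast
  qed
  have sF: "standard F" by (rule nonneg_coeff_standard) (rule cF)
  have sG: "standard G" by (rule nonneg_coeff_standard) (rule cG)
  have rr0: "real_rooted 0" unfolding real_rooted_def by simp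
  have np0: "nonpos_rooted 0" unfolding nonpos_rooted_def by simp
  have nprr: "nonpos_rooted p \<Longrightarrow> real_rooted p" for p
    unfolding nonpos_rooted_def real_rooted_def by blast
  consider (F0) "F = 0" | (G0) "G = 0" | (nz) "F \<noteq> 0" "G \<noteq> 0" by blast
  then show ?thesis
  proof cases
    case F0
    then have "good G" using h[of 1 1] by simp
    then show ?thesis using F0 sF np0 rr0 nprr unfolding interp_1cube_def interlaces_def by auto
  next
    case G0
    then have "good F" using h[of 1 1] by simp
    then show ?thesis using G0 sG np0 rr0 nprr unfolding interp_1cube_def interlaces_def by auto
  next
    case nz
    have nF: "nonpos_rooted F"
    proof (rule nonpos_closure[OF nz(1) cF])
      fix e :: real assume "e > 0"
      then have "good (smult 1 F + smult e G)" using h[of 1 e] by simp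
      then show "nonpos_rooted (F + smult e G)" by simp
    qed
    have nG: "nonpos_rooted G"
    proof (rule nonpos_closure[OF nz(2) cG])
      fix e :: real assume "e > 0"
      then have "good (smult e F + smult 1 G)" using h[of e 1] by simp
      then show "nonpos_rooted (G + smult e F)" by (simp add: add.commute)
    qed
    have h1: "poly (cp (smult c F + smult 1 G)) z \<noteq> 0" if "c > 0" "Im z > 0" for c z
    proof
      assume r: "poly (cp (smult c F + smult 1 G)) z = 0"
      have g: "nonpos_rooted (smult c F + smult 1 G)" using h[of c 1] that by simp
      have "smult c F + smult 1 G \<noteq> 0" by (rule combo_nonzero[OF nz(1) cF cG]) (use that in auto)
      then have "z \<in> \<real>" using nonpos_rooted_roots[OF g _ r] by blast
      then show False using that by (auto elim: Reals_cases)
    qed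
    have h2: "poly (cp (smult 1 G + smult c ([:0,1:] * F))) z \<noteq> 0" if "c > 0" "Im z > 0" for c z
    proof
      assume r: "poly (cp (smult 1 G + smult c ([:0,1:] * F))) z = 0"
      have g: "nonpos_rooted (smult 1 G + smult c ([:0,1:] * F))" using h[of 1 c] that by simp
      have "smult 1 G + smult c ([:0,1:] * F) \<noteq> 0"
        by (rule combo_nonzero[OF nz(2) cG coeff_X_nonneg[OF cF]]) (use that in auto)
      then have "z \<in> \<real>" using nonpos_rooted_roots[OF g _ r] by blast
      then show False using that by (auto elim: Reals_cases)
    qed
    have il: "(degree G = degree F + 1 \<and>
           (\<forall>i < length (zero_list F). zero_list G ! i \<le> zero_list F ! i \<and> zero_list F ! i \<le> zero_list G ! (i + 1)))
      \<or> (degree F = degree G \<and>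
           (\<forall>i < length (zero_list F). zero_list F ! i \<le> zero_list G ! i) \<and>
           (\<forall>i. i + 1 < length (zero_list F) \<longrightarrow> zero_list G ! i \<le> zero_list F ! (i + 1)))"
      by (rule interlace_bwd[OF nz nF nG sF sG h1 h2])
    have "F \<prec> G" unfolding interlaces_def Let_def using il nprr[OF nF] nprr[OF nG] by blast
    then show ?thesis unfolding interp_1cube_def using sF sG nF nG by blast
  qed
qed

lemma alg1:
  fixes A B P Q :: "real poly"
  shows "smult m (smult k A + smult p P) + smult n (smult k B + smult p Q) =
         smult k (smult m A + smult n B) + smult p (smult m P + smult n Q)"
  by (simp add: smult_add_right smult_smult algebra_simps)

lemma alg2:
  fixes A B P Q :: "real poly"
  shows "smult m (smult k B + smult p Q) + smult n ([:0,1:] * (smult k A + smult p P)) =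
         smult k (smult m B + smult n ([:0,1:] * A)) + smult p (smult m Q + smult n ([:0,1:] * P))"
  by (simp add: smult_add_right smult_smult algebra_simps)

lemma alg3:
  fixes A B P Q :: "real poly"
  shows "smult m (smult k P + smult p ([:0,1:] * A)) + smult n (smult k Q + smult p ([:0,1:] * B)) =
         smult k (smult m P + smult n Q) + smult p ([:0,1:] * (smult m A + smult n B))"
  by (simp add: smult_add_right smult_smult algebra_simps)

lemma alg4:
  fixes A B P Q :: "real poly"
  shows "smult m (smult k Q + smult p ([:0,1:] * B)) + smult n ([:0,1:] * (smult k P + smult p ([:0,1:] * A))) =
         smult k (smult m Q + smult n ([:0,1:] * P)) + smult p ([:0,1:] * (smult m B + smult n ([:0,1:] * A)))"
  by (simp add: smult_add_right smult_smult algebra_simps)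

lemma one_dir:
  fixes A B P Q :: "real poly"
  assumes C1: "\<forall>lam rho::real. lam > 0 \<longrightarrow> rho > 0 \<longrightarrow>
            interp_1cube (smult lam A + smult rho B) (smult lam P + smult rho Q) \<and>
            interp_1cube (smult lam B + smult rho ([:0, 1:] * A)) (smult lam Q + smult rho ([:0, 1:] * P))"
  shows "\<forall>kap p::real. kap > 0 \<longrightarrow> p > 0 \<longrightarrow>
            interp_1cube (smult kap A + smult p P) (smult kap B + smult p Q) \<and>
            interp_1cube (smult kap P + smult p ([:0, 1:] * A)) (smult kap Q + smult p ([:0, 1:] * B))"
proof (intro allI impI conjI)
  fix k p :: real assume k: "k > 0" and p: "p > 0"
  show "interp_1cube (smult k A + smult p P) (smult k B + smult p Q)"
  proof (rule L_bwd)
    fix m n :: real assume m: "m > 0" and n: "n > 0"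
    have c1: "interp_1cube (smult m A + smult n B) (smult m P + smult n Q)" using C1 m n by blast
    have c2: "interp_1cube (smult m B + smult n ([:0, 1:] * A)) (smult m Q + smult n ([:0, 1:] * P))"
      using C1 m n by blast
    show "good (smult m (smult k A + smult p P) + smult n (smult k B + smult p Q)) \<and>
          good (smult m (smult k B + smult p Q) + smult n ([:0,1:] * (smult k A + smult p P)))"
      using L_fwd[OF c1 k p] L_fwd[OF c2 k p] alg1[of m k A p P n B Q] alg2[of m k B p Q n A P] by metis
  qed
  show "interp_1cube (smult k P + smult p ([:0, 1:] * A)) (smult k Q + smult p ([:0, 1:] * B))"
  proof (rule L_bwd)
    fix m n :: real assume m: "m > 0" and n: "n > 0"
    have c1: "interp_1cube (smult m A + smult n B) (smult m P + smult n Q)" using C1 m n by blast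
    have c2: "interp_1cube (smult m B + smult n ([:0, 1:] * A)) (smult m Q + smult n ([:0, 1:] * P))"
      using C1 m n by blast
    show "good (smult m (smult k P + smult p ([:0, 1:] * A)) + smult n (smult k Q + smult p ([:0, 1:] * B))) \<and>
          good (smult m (smult k Q + smult p ([:0, 1:] * B)) + smult n ([:0,1:] * (smult k P + smult p ([:0, 1:] * A))))"
      using L_fwd[OF c1 k p] L_fwd[OF c2 k p] alg3[of m k P p A n Q B] alg4[of m k Q p B n P A] by metis
  qed
qed

theorem proposition4p1:
  fixes A B P Q :: "real poly"
  shows "(\<forall>lam rho::real. lam > 0 \<longrightarrow> rho > 0 \<longrightarrow>
            interp_1cube (smult lam A + smult rho B) (smult lam P + smult rho Q) \<and>
            interp_1cube (smult lam B + smult rho ([:0, 1:] * A)) (smult lam Q + smult rho ([:0, 1:] * P)))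
     \<longleftrightarrow>
         (\<forall>kap pi::real. kap > 0 \<longrightarrow> pi > 0 \<longrightarrow>
            interp_1cube (smult kap A + smult pi P) (smult kap B + smult pi Q) \<and>
            interp_1cube (smult kap P + smult pi ([:0, 1:] * A)) (smult kap Q + smult pi ([:0, 1:] * B)))"
proof
  assume "\<forall>lam rho::real. lam > 0 \<longrightarrow> rho > 0 \<longrightarrow>
            interp_1cube (smult lam A + smult rho B) (smult lam P + smult rho Q) \<and>
            interp_1cube (smult lam B + smult rho ([:0, 1:] * A)) (smult lam Q + smult rho ([:0, 1:] * P))"
  from one_dir[OF this] show "\<forall>kap pi::real. kap > 0 \<longrightarrow> pi > 0 \<longrightarrow>
            interp_1cube (smult kap A + smult pi P) (smult kap B + smult pi Q) \<and>
            interp_1cube (smult kap P + smult pi ([:0, 1:] * A)) (smult kap Q + smult pi ([:0, 1:] * B))" .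
next
  assume "\<forall>kap pi::real. kap > 0 \<longrightarrow> pi > 0 \<longrightarrow>
            interp_1cube (smult kap A + smult pi P) (smult kap B + smult pi Q) \<and>
            interp_1cube (smult kap P + smult pi ([:0, 1:] * A)) (smult kap Q + smult pi ([:0, 1:] * B))"
  from one_dir[of A P B Q, OF this] show "\<forall>lam rho::real. lam > 0 \<longrightarrow> rho > 0 \<longrightarrow>
            interp_1cube (smult lam A + smult rho B) (smult lam P + smult rho Q) \<and>
            interp_1cube (smult lam B + smult rho ([:0, 1:] * A)) (smult lam Q + smult rho ([:0, 1:] * P))" .
qed



end
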